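(* Let $\mathcal E$ be a nonlinear Dirichlet form on $L^2(\mu)$. If $1\in M(\mathcal E_e)$ and $\|1\|_{L_e}=0$, then $\ker\|\cdot\|_{L_e}=L^0(X,\mathfrak A_{\rm inv},\mu)$. In particular, $\ker\|\cdot\|_{L_e}=\mathbb R\cdot1$ implies that $\mathcal E$ is irreducible.
   Context: $(X,\mathfrak A,\mu)$ is $\sigma$-finite; $L^0(\mu)$ carries local convergence in measure. A nonlinear Dirichlet form is a lower semicontinuous convex $\mathcal E\colon L^2(\mu)\to[0,\infty]$ with $\mathcal E(-f)=\mathcal E(f)$, $\mathcal E(0)=0$, such that $\mathcal E(f+Cg)+\mathcal E(f-Cg)\le\mathcal E(f+g)+\mathcal E(f-g)$ for all $f,g$ and every 1-Lipschitz $C\colon\mathbb R\to\mathbb R$ with $C(0)=0$. $\mathcal E_e$ is the lower semicontinuous relaxation on $L^0(\mu)$ (w.r.t. local convergence in measure) of $\mathcal E$ extended by $+\infty$ outside $L^2(\mu)$ (it exists for nonlinear Dirichlet forms); $M(\mathcal E_e)=\{f:\lim_{\lambda\to0+}\mathcal E_e(\lambda f)=0\}$, $\|f\|_{L_e}=\inf\{\lambda>0:\mathcal E_e(\lambda^{-1}f)\le1\}$. A measurable $A$ is $\mathcal E$-invariant if $\mathcal E(1_Af)\le\mathcal E(f)$ for all $f\in L^2(\mu)$; $\mathfrak A_{\rm inv}$ is the $\sigma$-algebra of all $A$ such that $A$ or $X\setminus A$ is $\mathcal E$-invariant; $L^0(X,\mathfrak A_{\rm inv},\mu)$ denotes the $\mathfrak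 A_{\rm inv}$-measurable elements of $L^0(\mu)$. $\mathcal E$ is irreducible if every invariant set is null or co-null. *)

theory Defs
  imports "HOL-Analysis.Analysis"
begin

text \<open>Elements of L^0 / L^2 are represented by measurable real functions; all notions
below respect equality almost everywhere.\<close>

definition L2 :: "'a measure \<Rightarrow> ('a \<Rightarrow> real) set" where
  "L2 M = {f. f \<in> borel_measurable M \<and> integrable M (\<lambda>x. (f x)^2)}"

text \<open>Nonlinear Dirichlet form on L^2(M). The functional is given on representatives and
is required to be independent of the choice of representative.\<close>
definition nonlinear_dirichlet_form :: "'a measure \<Rightarrow> (('a \<Rightarrow> real) \<Rightarrow> ennreal) \<Rightarrow> bool" where
  "nonlinear_dirichlet_form M E \<longleftrightarrow>
     (\<forall>f\<in>L2 M. \<forall>g\<in>L2 M. (AE x in M. f x = g x) \<longrightarrow> E f = E g) \<and>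
     (\<forall>f\<in>L2 M. \<forall>g\<in>L2 M. \<forall>t::real. 0 \<le> t \<and> t \<le> 1 \<longrightarrow>
        E (\<lambda>x. t * f x + (1 - t) * g x) \<le> ennreal t * E f + ennreal (1 - t) * E g) \<and>
     (\<forall>fs f. (\<forall>n. fs n \<in> L2 M) \<and> f \<in> L2 M \<and>
        ((\<lambda>n. integral\<^sup>L M (\<lambda>x. (fs n x - f x)^2)) \<longlonglongrightarrow> 0)
        \<longrightarrow> E f \<le> liminf (\<lambda>n. E (fs n))) \<and>
     (\<forall>f\<in>L2 M. E (\<lambda>x. - f x) = E f) \<and>
     E (\<lambda>x. 0) = 0 \<and>
     (\<forall>f\<in>L2 M. \<forall>g\<in>L2 M. \<forall>C::real \<Rightarrow> real.
        (\<forall>s t. \<bar>C s - C t\<bar> \<le> \<bar>s - t\<bar>) \<and> C 0 = 0 \<longrightarrow>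
        E (\<lambda>x. f x + C (g x)) + E (\<lambda>x. f x - C (g x))
          \<le> E (\<lambda>x. f x + g x) + E (\<lambda>x. f x - g x))"

definition conv_loc_meas :: "'a measure \<Rightarrow> (nat \<Rightarrow> 'a \<Rightarrow> real) \<Rightarrow> ('a \<Rightarrow> real) \<Rightarrow> bool" where
  "conv_loc_meas M fs f \<longleftrightarrow>
     (\<forall>A\<in>sets M. emeasure M A < \<infinity> \<longrightarrow> (\<forall>\<epsilon>>0.
        ((\<lambda>n. emeasure M {x\<in>A. \<epsilon> < \<bar>fs n x - f x\<bar>}) \<longlonglongrightarrow> 0)))"

definition ext_L2 :: "'a measure \<Rightarrow> (('a \<Rightarrow> real) \<Rightarrow> ennreal) \<Rightarrow> ('a \<Rightarrow> real) \<Rightarrow> ennreal" where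
  "ext_L2 M E f = (if f \<in> L2 M then E f else \<infinity>)"

text \<open>Lower semicontinuous relaxation on L^0 w.r.t. local convergence in measure
(sequential form; the topology is metrizable since M is sigma-finite).\<close>
definition E_e :: "'a measure \<Rightarrow> (('a \<Rightarrow> real) \<Rightarrow> ennreal) \<Rightarrow> ('a \<Rightarrow> real) \<Rightarrow> ennreal" where
  "E_e M E f = Inf {liminf (\<lambda>n. ext_L2 M E (fs n)) | fs.
      (\<forall>n. fs n \<in> borel_measurable M) \<and> conv_loc_meas M fs f}"

definition M_Ee :: "'a measure \<Rightarrow> (('a \<Rightarrow> real) \<Rightarrow> ennreal) \<Rightarrow> ('a \<Rightarrow> real) set" where
  "M_Ee M E = {f. ((\<lambda>t. E_e M E (\<lambda>x. t * f x)) \<longlongrightarrow> 0) (at_right 0)}"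

text \<open>The Luxemburg-type functional; infimum of the empty set is +infinity.\<close>
definition Le_norm :: "'a measure \<Rightarrow> (('a \<Rightarrow> real) \<Rightarrow> ennreal) \<Rightarrow> ('a \<Rightarrow> real) \<Rightarrow> ennreal" where
  "Le_norm M E f = Inf {ennreal l | l. l > 0 \<and> E_e M E (\<lambda>x. f x / l) \<le> 1}"

definition E_invariant :: "'a measure \<Rightarrow> (('a \<Rightarrow> real) \<Rightarrow> ennreal) \<Rightarrow> 'a set \<Rightarrow> bool" where
  "E_invariant M E A \<longleftrightarrow> A \<in> sets M \<and>
     (\<forall>f\<in>L2 M. E (\<lambda>x. indicator A x * f x) \<le> E f)"

definition A_inv :: "'a measure \<Rightarrow> (('a \<Rightarrow> real) \<Rightarrow> ennreal) \<Rightarrow> 'a set set" where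
  "A_inv M E = {A \<in> sets M. E_invariant M E A \<or> E_invariant M E (space M - A)}"

definition irreducible_form :: "'a measure \<Rightarrow> (('a \<Rightarrow> real) \<Rightarrow> ennreal) \<Rightarrow> bool" where
  "irreducible_form M E \<longleftrightarrow>
     (\<forall>A. E_invariant M E A \<longrightarrow> emeasure M A = 0 \<or> emeasure M (space M - A) = 0)"

end

theory Submission
  imports Defs
begin


lemma L2_dom:
  assumes "f \<in> borel_measurable M" "g \<in> L2 M" "\<And>x. x \<in> space M \<Longrightarrow> \<bar>f x\<bar> \<le> \<bar>g x\<bar>"
  shows "f \<in> L2 M"
proof -
  have i: "integrable M (\<lambda>x. (g x)^2)" using assms(2) by (simp add: L2_def)
  have ae: "AE x in M. norm ((f x)^2) \<le> norm ((g x)^2)"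
    using assms(3) by (auto intro!: AE_I2 simp: abs_le_square_iff)
  have m: "(\<lambda>x. (f x)^2) \<in> borel_measurable M" using assms(1) by measurable
  have "integrable M (\<lambda>x. (f x)^2)"
    by (rule Bochner_Integration.integrable_bound[OF i m ae])
  then show ?thesis using assms(1) by (simp add: L2_def)
qed

lemma L2_measurable: "f \<in> L2 M \<Longrightarrow> f \<in> borel_measurable M"
  by (simp add: L2_def)

lemma L2_add:
  assumes "f \<in> L2 M" "g \<in> L2 M"
  shows "(\<lambda>x. f x + g x) \<in> L2 M"
proof -
  have m: "f \<in> borel_measurable M" "g \<in> borel_measurable M" using assms by (auto simp: L2_def)
  have i: "integrable M (\<lambda>x. 2 * (f x)^2 + 2 * (g x)^2)" using assms by (auto simp: L2_def)
  have ae: "AE x in M. norm ((f x + g x)^2) \<le> norm (2 * (f x)^2 + 2 * (g x)^2)"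
  proof (intro AE_I2)
    fix x have "(f x + g x)^2 \<le> 2 * (f x)^2 + 2 * (g x)^2"
    proof -
      have "0 \<le> (f x - g x)^2" by simp
      then show ?thesis by (simp add: power2_diff power2_sum)
    qed
    then show "norm ((f x + g x)^2) \<le> norm (2 * (f x)^2 + 2 * (g x)^2)" by simp
  qed
  have mm: "(\<lambda>x. (f x + g x)^2) \<in> borel_measurable M" using m by measurable
  have "integrable M (\<lambda>x. (f x + g x)^2)"
    by (rule Bochner_Integration.integrable_bound[OF i mm ae])
  then show ?thesis using m by (simp add: L2_def)
qed

lemma L2_scale:
  assumes "f \<in> L2 M"
  shows "(\<lambda>x. c * f x) \<in> L2 M"
  using assms by (auto simp: L2_def power_mult_distrib)

lemma L2_zero: "(\<lambda>x. 0) \<in> L2 M" by (simp add: L2_def)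

lemma L2_uminus: "f \<in> L2 M \<Longrightarrow> (\<lambda>x. - f x) \<in> L2 M"
  using L2_scale[of f M "-1"] by simp

lemma L2_diff: "f \<in> L2 M \<Longrightarrow> g \<in> L2 M \<Longrightarrow> (\<lambda>x. f x - g x) \<in> L2 M"
  using L2_add[OF _ L2_uminus] by simp

lemma L2_lip:
  assumes "g \<in> L2 M" "\<And>s t. \<bar>C s - C t\<bar> \<le> \<bar>s - t\<bar>" "C 0 = 0"
  shows "(\<lambda>x. C (g x)) \<in> L2 M"
proof (rule L2_dom[OF _ assms(1)])
  have "continuous_on UNIV C"
    by (rule lipschitz_on_continuous_on[of 1]) (auto simp: lipschitz_on_def dist_real_def assms(2))
  then show "(\<lambda>x. C (g x)) \<in> borel_measurable M"
    by (rule borel_measurable_continuous_on[OF _ L2_measurable[OF assms(1)]])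
  show "\<bar>C (g x)\<bar> \<le> \<bar>g x\<bar>" for x using assms(2)[of "g x" 0] assms(3) by simp
qed

locale ndf =
  fixes M :: "'a measure" and E :: "('a \<Rightarrow> real) \<Rightarrow> ennreal"
  assumes ndf: "nonlinear_dirichlet_form M E"
begin

lemmas ndf_unf = ndf[unfolded nonlinear_dirichlet_form_def]
lemmas ndf1 = conjunct1[OF ndf_unf]
lemmas ndf2 = conjunct1[OF conjunct2[OF ndf_unf]]
lemmas ndf3 = conjunct1[OF conjunct2[OF conjunct2[OF ndf_unf]]]
lemmas ndf4 = conjunct1[OF conjunct2[OF conjunct2[OF conjunct2[OF ndf_unf]]]]
lemmas ndf5 = conjunct1[OF conjunct2[OF conjunct2[OF conjunct2[OF conjunct2[OF ndf_unf]]]]]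
lemmas ndf6 = conjunct2[OF conjunct2[OF conjunct2[OF conjunct2[OF conjunct2[OF ndf_unf]]]]]

lemma E_cong: "f \<in> L2 M \<Longrightarrow> g \<in> L2 M \<Longrightarrow> AE x in M. f x = g x \<Longrightarrow> E f = E g"
  using ndf1 by blast

lemma E_convex: "f \<in> L2 M \<Longrightarrow> g \<in> L2 M \<Longrightarrow> 0 \<le> t \<Longrightarrow> t \<le> 1 \<Longrightarrow>
   E (\<lambda>x. t * f x + (1 - t) * g x) \<le> ennreal t * E f + ennreal (1 - t) * E g"
  using ndf2 by blast

lemma E_lsc: "(\<And>n. fs n \<in> L2 M) \<Longrightarrow> f \<in> L2 M \<Longrightarrow>
        ((\<lambda>n. integral\<^sup>L M (\<lambda>x. (fs n x - f x)^2)) \<longlonglongrightarrow> 0) \<Longrightarrow> E f \<le> liminf (\<lambda>n. E (fs n))"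
  using ndf3 by blast

lemma E_uminus: "f \<in> L2 M \<Longrightarrow> E (\<lambda>x. - f x) = E f"
  using ndf4 by blast

lemma E_zero: "E (\<lambda>x. 0) = 0"
  using ndf5 .

lemma E_contr2: "f \<in> L2 M \<Longrightarrow> g \<in> L2 M \<Longrightarrow> (\<forall>s t. \<bar>C s - C t\<bar> \<le> \<bar>s - t\<bar>) \<Longrightarrow> C 0 = 0 \<Longrightarrow>
        E (\<lambda>x. f x + C (g x)) + E (\<lambda>x. f x - C (g x))
          \<le> E (\<lambda>x. f x + g x) + E (\<lambda>x. f x - g x)"
  using ndf6 by blast

lemma ennreal_double_le:
  assumes "(a::ennreal) + a \<le> b + b" shows "a \<le> b"
proof -
  have "2 * a \<le> 2 * b" using assms by (simp add: mult_2)
  then show ?thesis by (subst (asm) ennreal_mult_le_mult_iff) auto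
qed

lemma E_contr:
  assumes "g \<in> L2 M" "\<And>s t. \<bar>C s - C t\<bar> \<le> \<bar>s - t\<bar>" "C 0 = 0"
  shows "E (\<lambda>x. C (g x)) \<le> E g"
proof -
  have h0: "E (\<lambda>x. 0 + C (g x)) + E (\<lambda>x. 0 - C (g x)) \<le> E (\<lambda>x. 0 + g x) + E (\<lambda>x. 0 - g x)"
    by (rule E_contr2[OF L2_zero assms(1)]) (use assms in auto)
  have eqC: "E (\<lambda>x. - C (g x)) = E (\<lambda>x. C (g x))"
    by (rule E_uminus[OF L2_lip[OF assms]])
  have eqg: "E (\<lambda>x. - g x) = E g" by (rule E_uminus[OF assms(1)])
  have h: "E (\<lambda>x. C (g x)) + E (\<lambda>x. - C (g x)) \<le> E g + E (\<lambda>x. - g x)"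
    using h0 by simp
  then have "E (\<lambda>x. C (g x)) + E (\<lambda>x. C (g x)) \<le> E g + E g" unfolding eqC eqg .
  then show ?thesis by (rule ennreal_double_le)
qed

end


context ndf begin

lemma E_scale:
  assumes "g \<in> L2 M" "0 \<le> t" "t \<le> 1"
  shows "E (\<lambda>x. t * g x) \<le> ennreal t * E g"
proof -
  have "E (\<lambda>x. t * g x + (1 - t) * 0) \<le> ennreal t * E g + ennreal (1 - t) * E (\<lambda>x. 0)"
    using E_convex[OF assms(1) L2_zero assms(2,3)] by simp
  then show ?thesis by (simp add: E_zero)
qed

lemma E_scale_abs:
  assumes "g \<in> L2 M" "\<bar>t\<bar> \<le> 1"
  shows "E (\<lambda>x. t * g x) \<le> ennreal \<bar>t\<bar> * E g"
proof (cases "0 \<le> t")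
  case True then show ?thesis using E_scale[OF assms(1), of t] assms by simp
next
  case False
  have "E (\<lambda>x. t * g x) = E (\<lambda>x. - (\<bar>t\<bar> * g x))"
    using False by (simp add: abs_if)
  also have "\<dots> = E (\<lambda>x. \<bar>t\<bar> * g x)" by (rule E_uminus[OF L2_scale[OF assms(1)]])
  also have "\<dots> \<le> ennreal \<bar>t\<bar> * E g" using E_scale[OF assms(1), of "\<bar>t\<bar>"] assms by simp
  finally show ?thesis .
qed

lemma E_mid:
  assumes "u \<in> L2 M" "v \<in> L2 M"
  shows "E (\<lambda>x. (u x + v x) / 2) \<le> ennreal (1/2) * E u + ennreal (1/2) * E v"
proof -
  have "(\<lambda>x. (u x + v x) / 2) = (\<lambda>x. (1/2) * u x + (1 - 1/2) * v x)"
    by (auto simp: fun_eq_iff field_simps)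
  then show ?thesis using E_convex[OF assms, of "1/2"] by simp
qed

lemma min_formula: "(a + b) / 2 + - \<bar>(a - b) / 2\<bar> = min a (b::real)"
  by (auto simp: min_def abs_real_def field_simps)
lemma max_formula: "(a + b) / 2 - - \<bar>(a - b) / 2\<bar> = max a (b::real)"
  by (auto simp: max_def abs_real_def field_simps)

lemma E_minmax:
  assumes g: "g \<in> L2 M" and w: "w \<in> L2 M"
  shows "E (\<lambda>x. min (g x) (w x)) + E (\<lambda>x. max (g x) (w x)) \<le> E g + E w"
proof -
  let ?f = "\<lambda>x. (g x + w x) / 2" and ?h = "\<lambda>x. (g x - w x) / 2" and ?C = "\<lambda>s::real. - \<bar>s\<bar>"
  have fL: "?f \<in> L2 M" using L2_scale[OF L2_add[OF g w], of "1/2"] by simp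
  have hL: "?h \<in> L2 M" using L2_scale[OF L2_diff[OF g w], of "1/2"] by simp
  have C: "\<forall>s t. \<bar>?C s - ?C t\<bar> \<le> \<bar>s - t\<bar>" by (auto simp: abs_real_def)
  have h0: "E (\<lambda>x. ?f x + ?C (?h x)) + E (\<lambda>x. ?f x - ?C (?h x)) \<le> E (\<lambda>x. ?f x + ?h x) + E (\<lambda>x. ?f x - ?h x)"
    by (rule E_contr2[OF fL hL C]) simp
  have e1: "(\<lambda>x. ?f x + ?C (?h x)) = (\<lambda>x. min (g x) (w x))"
    using min_formula by (simp add: fun_eq_iff)
  have e2: "(\<lambda>x. ?f x - ?C (?h x)) = (\<lambda>x. max (g x) (w x))"
    using max_formula by (simp add: fun_eq_iff)
  have e3: "(\<lambda>x. ?f x + ?h x) = g" by (auto simp: fun_eq_iff field_simps)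
  have e4: "(\<lambda>x. ?f x - ?h x) = w" by (auto simp: fun_eq_iff field_simps)
  show ?thesis using h0 unfolding e1 e2 e3 e4 .
qed

lemma E_min: "g \<in> L2 M \<Longrightarrow> w \<in> L2 M \<Longrightarrow> E (\<lambda>x. min (g x) (w x)) \<le> E g + E w"
proof -
  assume a: "g \<in> L2 M" "w \<in> L2 M"
  have "E (\<lambda>x. min (g x) (w x)) \<le> E (\<lambda>x. min (g x) (w x)) + E (\<lambda>x. max (g x) (w x))"
    by (rule add_increasing2[OF zero_le order_refl])
  also have "\<dots> \<le> E g + E w" by (rule E_minmax[OF a])
  finally show ?thesis .
qed

lemma E_max: "g \<in> L2 M \<Longrightarrow> w \<in> L2 M \<Longrightarrow> E (\<lambda>x. max (g x) (w x)) \<le> E g + E w"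
proof -
  assume a: "g \<in> L2 M" "w \<in> L2 M"
  have "E (\<lambda>x. max (g x) (w x)) \<le> E (\<lambda>x. min (g x) (w x)) + E (\<lambda>x. max (g x) (w x))"
    by (rule add_increasing[OF zero_le order_refl])
  also have "\<dots> \<le> E g + E w" by (rule E_minmax[OF a])
  finally show ?thesis .
qed

end

abbreviation cl where "cl M fs f \<equiv> conv_loc_meas M fs f"

lemma meas_set:
  fixes u :: "'a \<Rightarrow> real"
  assumes "A \<in> sets M" "u \<in> borel_measurable M"
  shows "{x\<in>A. e < \<bar>u x\<bar>} \<in> sets M"
proof -
  have "{x\<in>A. e < \<bar>u x\<bar>} = A \<inter> {x\<in>space M. e < \<bar>u x\<bar>}"
    using sets.sets_into_space[OF assms(1)] by auto
  moreover have "{x\<in>space M. e < \<bar>u x\<bar>} \<in> sets M" using assms(2) by measurable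
  ultimately show ?thesis using assms(1) by auto
qed

lemma meas_set2:
  fixes u v :: "'a \<Rightarrow> real"
  assumes "A \<in> sets M" "u \<in> borel_measurable M" "v \<in> borel_measurable M"
  shows "{x\<in>A. e < \<bar>u x - v x\<bar>} \<in> sets M"
  using meas_set[OF assms(1) borel_measurable_diff[OF assms(2,3)]] .

lemma cl_lin:
  assumes fs: "cl M fs f" and gs: "cl M gs g" and a: "0 \<le> a" and b: "0 \<le> b"
    and m: "\<And>n. fs n \<in> borel_measurable M" "f \<in> borel_measurable M"
           "\<And>n. gs n \<in> borel_measurable M" "g \<in> borel_measurable M"
           "\<And>n. hs n \<in> borel_measurable M" "h \<in> borel_measurable M"
    and le: "\<And>n x. x \<in> space M \<Longrightarrow> \<bar>hs n x - h x\<bar> \<le> a * \<bar>fs n x - f x\<bar> + b * \<bar>gs n x - g x\<bar>"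
  shows "cl M hs h"
  unfolding conv_loc_meas_def
proof (intro ballI impI allI)
  fix A :: "'a set" and e :: real
  assume A: "A \<in> sets M" "emeasure M A < \<infinity>" and e: "0 < e"
  define e1 where "e1 = (e / 2) / (a + 1)"
  define e2 where "e2 = (e / 2) / (b + 1)"
  have na: "a + 1 \<noteq> 0" and nb: "b + 1 \<noteq> 0" using a b by linarith+
  have e1p: "0 < e1" unfolding e1_def using e na a by (intro divide_pos_pos) auto
  have e2p: "0 < e2" unfolding e2_def using e nb b by (intro divide_pos_pos) auto
  have t1: "(\<lambda>n. emeasure M {x\<in>A. e1 < \<bar>fs n x - f x\<bar>}) \<longlonglongrightarrow> 0"
    using fs A e1p unfolding conv_loc_meas_def by blast
  have t2: "(\<lambda>n. emeasure M {x\<in>A. e2 < \<bar>gs n x - g x\<bar>}) \<longlonglongrightarrow> 0"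
    using gs A e2p unfolding conv_loc_meas_def by blast
  have sub: "{x\<in>A. e < \<bar>hs n x - h x\<bar>} \<subseteq> {x\<in>A. e1 < \<bar>fs n x - f x\<bar>} \<union> {x\<in>A. e2 < \<bar>gs n x - g x\<bar>}" for n
  proof
    fix x assume x: "x \<in> {x\<in>A. e < \<bar>hs n x - h x\<bar>}"
    then have xs: "x \<in> space M" using sets.sets_into_space[OF A(1)] by auto
    show "x \<in> {x\<in>A. e1 < \<bar>fs n x - f x\<bar>} \<union> {x\<in>A. e2 < \<bar>gs n x - g x\<bar>}"
    proof (rule ccontr)
      assume "\<not> ?thesis"
      then have d1: "\<bar>fs n x - f x\<bar> \<le> e1" and d2: "\<bar>gs n x - g x\<bar> \<le> e2" using x by auto
      have "a * \<bar>fs n x - f x\<bar> \<le> a * e1" by (rule mult_left_mono[OF d1 a])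
      also have "a * e1 < (a + 1) * e1" using e1p by (simp add: distrib_right)
      also have "(a + 1) * e1 = (a + 1) * (e / 2) / (a + 1)" unfolding e1_def by (rule times_divide_eq_right)
      also have "\<dots> = e / 2" by (rule nonzero_mult_div_cancel_left[OF na])
      finally have i1: "a * \<bar>fs n x - f x\<bar> < e / 2" .
      have "b * \<bar>gs n x - g x\<bar> \<le> b * e2" by (rule mult_left_mono[OF d2 b])
      also have "b * e2 < (b + 1) * e2" using e2p by (simp add: distrib_right)
      also have "(b + 1) * e2 = (b + 1) * (e / 2) / (b + 1)" unfolding e2_def by (rule times_divide_eq_right)
      also have "\<dots> = e / 2" by (rule nonzero_mult_div_cancel_left[OF nb])
      finally have i2: "b * \<bar>gs n x - g x\<bar> < e / 2" .
      have "e < \<bar>hs n x - h x\<bar>" using x by blast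
      then show False using le[OF xs, of n] i1 i2 by linarith
    qed
  qed
  have bound: "emeasure M {x\<in>A. e < \<bar>hs n x - h x\<bar>} \<le>
      emeasure M {x\<in>A. e1 < \<bar>fs n x - f x\<bar>} + emeasure M {x\<in>A. e2 < \<bar>gs n x - g x\<bar>}" for n
  proof -
    have "emeasure M {x\<in>A. e < \<bar>hs n x - h x\<bar>} \<le>
        emeasure M ({x\<in>A. e1 < \<bar>fs n x - f x\<bar>} \<union> {x\<in>A. e2 < \<bar>gs n x - g x\<bar>})"
      by (rule emeasure_mono[OF sub]) (intro sets.Un meas_set2 A(1) m)
    also have "\<dots> \<le> emeasure M {x\<in>A. e1 < \<bar>fs n x - f x\<bar>} + emeasure M {x\<in>A. e2 < \<bar>gs n x - g x\<bar>}"
      by (intro emeasure_subadditive meas_set2 A(1) m)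
    finally show ?thesis .
  qed
  have T: "(\<lambda>n. emeasure M {x\<in>A. e1 < \<bar>fs n x - f x\<bar>} + emeasure M {x\<in>A. e2 < \<bar>gs n x - g x\<bar>}) \<longlonglongrightarrow> 0"
    using tendsto_add[OF t1 t2] by simp
  have ev1: "eventually (\<lambda>n. 0 \<le> emeasure M {x\<in>A. e < \<bar>hs n x - h x\<bar>}) sequentially" by simp
  have ev2: "eventually (\<lambda>n. emeasure M {x\<in>A. e < \<bar>hs n x - h x\<bar>} \<le>
      emeasure M {x\<in>A. e1 < \<bar>fs n x - f x\<bar>} + emeasure M {x\<in>A. e2 < \<bar>gs n x - g x\<bar>}) sequentially"
    by (intro always_eventually allI bound)
  show "(\<lambda>n. emeasure M {x\<in>A. e < \<bar>hs n x - h x\<bar>}) \<longlonglongrightarrow> 0"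
    by (rule tendsto_sandwich[OF ev1 ev2 tendsto_const T])
qed

lemma cl_const: "cl M (\<lambda>n. f) f"
  unfolding conv_loc_meas_def
proof (intro ballI impI allI)
  fix A :: "'a set" and e :: real
  assume "0 < e"
  then have "{x\<in>A. e < \<bar>f x - f x\<bar>} = {}" by auto
  then show "(\<lambda>n. emeasure M {x\<in>A. e < \<bar>f x - f x\<bar>}) \<longlonglongrightarrow> 0" by (simp only: emeasure_empty tendsto_const)
qed

lemma cl_lip:
  assumes fs: "cl M fs f" and a: "0 \<le> a"
    and m: "\<And>n. fs n \<in> borel_measurable M" "f \<in> borel_measurable M"
           "\<And>n. hs n \<in> borel_measurable M" "h \<in> borel_measurable M"
    and le: "\<And>n x. x \<in> space M \<Longrightarrow> \<bar>hs n x - h x\<bar> \<le> a * \<bar>fs n x - f x\<bar>"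
  shows "cl M hs h"
proof (rule cl_lin[OF fs cl_const[of M f] a order_refl m(1,2) m(2) m(2) m(3,4)])
  fix n x assume x: "x \<in> space M"
  have "\<bar>hs n x - h x\<bar> \<le> a * \<bar>fs n x - f x\<bar>" by (rule le[OF x])
  then show "\<bar>hs n x - h x\<bar> \<le> a * \<bar>fs n x - f x\<bar> + 0 * \<bar>f x - f x\<bar>" by simp
qed

lemma cl_add:
  assumes "cl M fs f" "cl M gs g"
    and m: "\<And>n. fs n \<in> borel_measurable M" "f \<in> borel_measurable M"
           "\<And>n. gs n \<in> borel_measurable M" "g \<in> borel_measurable M"
  shows "cl M (\<lambda>n x. fs n x + gs n x) (\<lambda>x. f x + g x)"
proof -
  have h1: "(\<lambda>x. fs n x + gs n x) \<in> borel_measurable M" for n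
    by (intro borel_measurable_add m)
  have h2: "(\<lambda>x. f x + g x) \<in> borel_measurable M"
    by (intro borel_measurable_add m)
  show ?thesis
  proof (rule cl_lin[OF assms(1,2) zero_le_one zero_le_one m h1 h2])
    fix n x
    have e: "fs n x + gs n x - (f x + g x) = (fs n x - f x) + (gs n x - g x)" by simp
    show "\<bar>fs n x + gs n x - (f x + g x)\<bar> \<le> 1 * \<bar>fs n x - f x\<bar> + 1 * \<bar>gs n x - g x\<bar>"
      unfolding e mult_1 by (rule abs_triangle_ineq)
  qed
qed

lemma cl_scale:
  assumes "cl M fs f" and m: "\<And>n. fs n \<in> borel_measurable M" "f \<in> borel_measurable M"
  shows "cl M (\<lambda>n x. c * fs n x) (\<lambda>x. c * f x)"
proof (rule cl_lip[OF assms(1) abs_ge_zero[of c] m])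
  show "(\<lambda>x. c * fs n x) \<in> borel_measurable M" for n by (intro borel_measurable_times borel_measurable_const m)
  show "(\<lambda>x. c * f x) \<in> borel_measurable M" by (intro borel_measurable_times borel_measurable_const m)
  show "\<bar>c * fs n x - c * f x\<bar> \<le> \<bar>c\<bar> * \<bar>fs n x - f x\<bar>" for n x
  proof -
    have "c * fs n x - c * f x = c * (fs n x - f x)" by (simp add: right_diff_distrib)
    then show ?thesis by (simp add: abs_mult)
  qed
qed

lemma cl_ae:
  assumes "cl M fs f" "AE x in M. f x = g x"
    and m: "\<And>n. fs n \<in> borel_measurable M" "f \<in> borel_measurable M" "g \<in> borel_measurable M"
  shows "cl M fs g"
  unfolding conv_loc_meas_def
proof (intro ballI impI allI)
  fix A :: "'a set" and e :: real
  assume A: "A \<in> sets M" "emeasure M A < \<infinity>" and e: "0 < e"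
  have "(\<lambda>n. emeasure M {x\<in>A. e < \<bar>fs n x - f x\<bar>}) \<longlonglongrightarrow> 0"
    using assms(1) A e unfolding conv_loc_meas_def by blast
  moreover have "emeasure M {x\<in>A. e < \<bar>fs n x - f x\<bar>} = emeasure M {x\<in>A. e < \<bar>fs n x - g x\<bar>}" for n
  proof (rule emeasure_eq_AE)
    show "AE x in M. (x \<in> {x\<in>A. e < \<bar>fs n x - f x\<bar>}) = (x \<in> {x\<in>A. e < \<bar>fs n x - g x\<bar>})"
      using assms(2) by eventually_elim auto
  qed (intro meas_set2 A m)+
  ultimately show "(\<lambda>n. emeasure M {x\<in>A. e < \<bar>fs n x - g x\<bar>}) \<longlonglongrightarrow> 0" by simp
qed

lemma cl_subseq:
  assumes "cl M fs f" "strict_mono r"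
  shows "cl M (\<lambda>n. fs (r n)) f"
  unfolding conv_loc_meas_def
proof (intro ballI impI allI)
  fix A :: "'a set" and e :: real
  assume A: "A \<in> sets M" "emeasure M A < \<infinity>" and e: "0 < e"
  have "(\<lambda>n. emeasure M {x\<in>A. e < \<bar>fs n x - f x\<bar>}) \<longlonglongrightarrow> 0"
    using assms(1) A e unfolding conv_loc_meas_def by blast
  from LIMSEQ_subseq_LIMSEQ[OF this assms(2)]
  show "(\<lambda>n. emeasure M {x\<in>A. e < \<bar>fs (r n) x - f x\<bar>}) \<longlonglongrightarrow> 0" by (simp add: comp_def)
qed

lemma cl_pointwise:
  assumes lim: "\<And>x. x \<in> space M \<Longrightarrow> (\<lambda>n. fs n x) \<longlonglongrightarrow> f x"
    and m: "\<And>n. fs n \<in> borel_measurable M" "f \<in> borel_measurable M"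
  shows "cl M fs f"
  unfolding conv_loc_meas_def
proof (intro ballI impI allI)
  fix A :: "'a set" and e :: real
  assume A: "A \<in> sets M" "emeasure M A < \<infinity>" and e: "0 < e"
  define T where "T n = (\<Union>k\<in>{n..}. {x\<in>A. e < \<bar>fs k x - f x\<bar>})" for n
  have Tm: "T n \<in> sets M" for n unfolding T_def
    by (intro sets.countable_UN') (auto intro: meas_set2[OF A(1) m(1) m(2)])
  have Tdec: "decseq T" unfolding decseq_def T_def by (intro allI impI UN_mono) auto
  have Tfin: "emeasure M (T n) \<noteq> \<infinity>" for n
  proof -
    have "T n \<subseteq> A" unfolding T_def by auto
    then have "emeasure M (T n) \<le> emeasure M A" by (rule emeasure_mono[OF _ A(1)])
    then show ?thesis using A(2) by (auto simp: top_unique)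
  qed
  have Tint: "(\<Inter>n. T n) = {}"
  proof (rule ccontr)
    assume "(\<Inter>n. T n) \<noteq> {}"
    then obtain x where "x \<in> (\<Inter>n. T n)" by blast
    then have x: "\<And>n. x \<in> T n" by blast
    then have xA: "x \<in> A" unfolding T_def by auto
    then have xs: "x \<in> space M" using sets.sets_into_space[OF A(1)] by auto
    from lim[OF xs] have "\<forall>\<^sub>F k in sequentially. dist (fs k x) (f x) < e"
      using e by (rule tendstoD)
    then obtain N where N: "\<And>k. k \<ge> N \<Longrightarrow> \<bar>fs k x - f x\<bar> < e"
      by (auto simp: eventually_sequentially dist_real_def)
    have "x \<in> T N" by (rule x)
    then obtain k where k: "k \<ge> N" "e < \<bar>fs k x - f x\<bar>" unfolding T_def by blast
    show False using N[OF k(1)] k(2) by linarith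
  qed
  have "(\<lambda>n. emeasure M (T n)) \<longlonglongrightarrow> emeasure M (\<Inter>n. T n)"
    by (rule Lim_emeasure_decseq) (use Tm Tdec Tfin in auto)
  then have T0: "(\<lambda>n. emeasure M (T n)) \<longlonglongrightarrow> 0" using Tint by simp
  have "emeasure M {x\<in>A. e < \<bar>fs n x - f x\<bar>} \<le> emeasure M (T n)" for n
    by (rule emeasure_mono[OF _ Tm]) (unfold T_def, blast)
  then show "(\<lambda>n. emeasure M {x\<in>A. e < \<bar>fs n x - f x\<bar>}) \<longlonglongrightarrow> 0"
    by (intro tendsto_sandwich[of "\<lambda>n. 0", OF _ _ tendsto_const T0]) (auto intro: always_eventually)
qed



lemma liminf_le_bound: "(\<And>n. X n \<le> (B::ennreal)) \<Longrightarrow> liminf X \<le> B"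
  by (rule Liminf_le[OF sequentially_bot]) (simp add: always_eventually)

lemma sq_diff_le: "(a - b)^2 \<le> 2 * a^2 + 2 * (b::real)^2"
proof -
  have "0 \<le> (a + b)^2" by simp
  then show ?thesis by (simp add: power2_diff power2_sum)
qed

lemma sq_le_of_abs_le: "\<bar>a\<bar> \<le> (G::real) \<Longrightarrow> a^2 \<le> G^2"
proof -
  assume h: "\<bar>a\<bar> \<le> G"
  have "\<bar>a\<bar>^2 \<le> G^2" by (rule power_mono[OF h abs_ge_zero])
  then show ?thesis by simp
qed

context ndf begin

lemma E_lsc_ae:
  assumes w: "\<And>n. w n \<in> L2 M" "w0 \<in> L2 M" and G: "G \<in> L2 M"
    and lim: "AE x in M. (\<lambda>n. w n x) \<longlonglongrightarrow> w0 x"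
    and bnd: "\<And>n x. x \<in> space M \<Longrightarrow> \<bar>w n x\<bar> \<le> G x"
    and EB: "\<And>n. E (w n) \<le> B"
  shows "E w0 \<le> B"
proof -
  have m: "\<And>n. w n \<in> borel_measurable M" "w0 \<in> borel_measurable M"
    using w by (auto simp: L2_def)
  have iG: "integrable M (\<lambda>x. (G x)^2)" and iw: "integrable M (\<lambda>x. (w0 x)^2)"
    using w G by (auto simp: L2_def)
  have ib: "integrable M (\<lambda>x. 2 * (G x)^2 + 2 * (w0 x)^2)"
    by (intro Bochner_Integration.integrable_add integrable_mult_right iG iw)
  have "(\<lambda>n. integral\<^sup>L M (\<lambda>x. (w n x - w0 x)^2)) \<longlonglongrightarrow> integral\<^sup>L M (\<lambda>x. 0)"
  proof (rule integral_dominated_convergence[OF _ _ ib])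
    show "(\<lambda>x. 0::real) \<in> borel_measurable M" by simp
    show "(\<lambda>x. (w n x - w0 x)^2) \<in> borel_measurable M" for n
      using m(1)[of n] m(2) by measurable
    show "AE x in M. (\<lambda>n. (w n x - w0 x)^2) \<longlonglongrightarrow> 0"
      using lim
    proof eventually_elim
      case (elim x)
      have "(\<lambda>n. (w n x - w0 x)^2) \<longlonglongrightarrow> (w0 x - w0 x)^2"
        by (intro tendsto_intros elim)
      then show ?case by simp
    qed
    show "AE x in M. norm ((w n x - w0 x)^2) \<le> 2 * (G x)^2 + 2 * (w0 x)^2" for n
    proof (rule AE_I2)
      fix x assume x: "x \<in> space M"
      have "(w n x - w0 x)^2 \<le> 2 * (w n x)^2 + 2 * (w0 x)^2" by (rule sq_diff_le)
      also have "(w n x)^2 \<le> (G x)^2" by (rule sq_le_of_abs_le[OF bnd[OF x]])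
      then have "2 * (w n x)^2 + 2 * (w0 x)^2 \<le> 2 * (G x)^2 + 2 * (w0 x)^2" by simp
      finally show "norm ((w n x - w0 x)^2) \<le> 2 * (G x)^2 + 2 * (w0 x)^2" by simp
    qed
  qed
  then have "(\<lambda>n. integral\<^sup>L M (\<lambda>x. (w n x - w0 x)^2)) \<longlonglongrightarrow> 0" by simp
  then have "E w0 \<le> liminf (\<lambda>n. E (w n))" by (rule E_lsc[OF w])
  also have "\<dots> \<le> B" by (rule liminf_le_bound[OF EB])
  finally show ?thesis .
qed

end

locale sndf = ndf +
  assumes sf: "sigma_finite_measure M"
begin

lemma exhaust:
  obtains A :: "nat \<Rightarrow> 'a set"
  where "\<And>i. A i \<in> sets M" "(\<Union>i. A i) = space M" "\<And>i. emeasure M (A i) < \<infinity>" "incseq A"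
proof -
  obtain A :: "nat \<Rightarrow> 'a set" where A: "range A \<subseteq> sets M" "(\<Union>i. A i) = space M"
    "\<And>i. emeasure M (A i) \<noteq> \<infinity>" "incseq A"
    using sigma_finite_measure.sigma_finite_incseq[OF sf] by metis
  show ?thesis
  proof (rule that[of A])
    show "A i \<in> sets M" for i using A(1) by auto
    show "emeasure M (A i) < \<infinity>" for i using A(3)[of i] by (simp add: less_top)
  qed (use A in auto)
qed

lemma cl_eventually:
  assumes c: "cl M fs f" and A: "A \<in> sets M" "emeasure M A < \<infinity>" and e: "0 < e" and d: "0 < d"
  shows "\<exists>N. \<forall>n\<ge>N. emeasure M {x\<in>A. e < \<bar>fs n x - f x\<bar>} < d"
proof -
  have t: "(\<lambda>n. emeasure M {x\<in>A. e < \<bar>fs n x - f x\<bar>}) \<longlonglongrightarrow> 0"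
    using c A e unfolding conv_loc_meas_def by blast
  from order_tendstoD(2)[OF t d] show ?thesis by (simp add: eventually_sequentially)
qed

lemma ae_subseq:
  assumes c: "cl M fs f" and m: "\<And>n. fs n \<in> borel_measurable M" "f \<in> borel_measurable M"
  shows "\<exists>r. strict_mono r \<and> (AE x in M. (\<lambda>n. fs (r n) x) \<longlonglongrightarrow> f x)"
proof -
  obtain A where Am: "\<And>i. A i \<in> sets M" and Au: "(\<Union>i. A i) = space M"
    and Af: "\<And>i. emeasure M (A i) < \<infinity>" and Ai: "incseq A"
    by (rule exhaust) blast
  have "\<exists>N. \<forall>n\<ge>N. emeasure M {x\<in>A k. (1/2)^k < \<bar>fs n x - f x\<bar>} < ennreal ((1/2)^k)" for k
    by (rule cl_eventually[OF c Am Af]) simp_all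
  then obtain N where N: "\<And>k n. n \<ge> N k \<Longrightarrow> emeasure M {x\<in>A k. (1/2)^k < \<bar>fs n x - f x\<bar>} < ennreal ((1/2)^k)"
    by metis
  define r where "r = rec_nat (N 0) (\<lambda>k rk. max (N (Suc k)) (Suc rk))"
  have r0: "r 0 = N 0" and rS: "\<And>k. r (Suc k) = max (N (Suc k)) (Suc (r k))" by (simp_all add: r_def)
  have rmono: "strict_mono r" by (rule strict_monoI_Suc) (simp add: rS)
  have rN: "r k \<ge> N k" for k by (cases k) (simp_all add: r0 rS)
  define D where "D k = {x\<in>A k. (1/2)^k < \<bar>fs (r k) x - f x\<bar>}" for k
  have Dm: "D k \<in> sets M" for k unfolding D_def by (rule meas_set2[OF Am m(1) m(2)])
  have Dlt: "emeasure M (D k) < ennreal ((1/2)^k)" for k unfolding D_def by (rule N[OF rN])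
  have Dfin: "emeasure M (D k) < \<infinity>" for k using Dlt[of k] by (rule order.strict_trans) simp
  have Dmeas: "measure M (D k) \<le> (1/2)^k" for k
  proof -
    have "emeasure M (D k) = ennreal (measure M (D k))"
      using Dfin[of k] by (intro emeasure_eq_ennreal_measure) simp
    with Dlt[of k] have "ennreal (measure M (D k)) < ennreal ((1/2)^k)" by simp
    then have "measure M (D k) < (1/2)^k" by (subst (asm) ennreal_less_iff) simp_all
    then show ?thesis by simp
  qed
  have sum: "summable (\<lambda>k. measure M (D k))"
  proof (rule summable_comparison_test')
    show "summable (\<lambda>k. (1/2::real)^k)" by (rule summable_geometric) simp
    show "norm (measure M (D k)) \<le> (1/2)^k" for k using Dmeas[of k] by simp
  qed
  have ae: "AE x in M. eventually (\<lambda>k. x \<in> space M - D k) sequentially"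
    by (rule borel_cantelli_AE1[OF Dm Dfin sum])
  have "AE x in M. (\<lambda>n. fs (r n) x) \<longlonglongrightarrow> f x"
    using ae
  proof eventually_elim
    case (elim x)
    then obtain K where K: "\<And>k. k \<ge> K \<Longrightarrow> x \<in> space M - D k"
      by (auto simp: eventually_sequentially)
    have xs: "x \<in> space M" using K[of K] by blast
    then obtain k0 where k0: "x \<in> A k0" using Au by blast
    have xA: "x \<in> A k" if "k \<ge> k0" for k using Ai k0 that by (auto simp: incseq_def)
    have bnd: "\<bar>fs (r k) x - f x\<bar> \<le> (1/2)^k" if "k \<ge> max K k0" for k
    proof -
      have "x \<notin> D k" using K[of k] that by auto
      moreover have "x \<in> A k" using xA[of k] that by auto
      ultimately show ?thesis unfolding D_def by auto
    qed
    have "(\<lambda>k. fs (r k) x - f x) \<longlonglongrightarrow> 0"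
    proof (rule Lim_null_comparison)
      show "eventually (\<lambda>k. norm (fs (r k) x - f x) \<le> (1/2)^k) sequentially"
        unfolding eventually_sequentially using bnd by (intro exI[of _ "max K k0"]) simp
      show "(\<lambda>k. (1/2::real)^k) \<longlonglongrightarrow> 0" by (rule LIMSEQ_power_zero) simp
    qed
    then have "(\<lambda>k. fs (r k) x - f x + f x) \<longlonglongrightarrow> 0 + f x" by (intro tendsto_add tendsto_const)
    then show ?case by simp
  qed
  with rmono show ?thesis by blast
qed

lemma E_lsc_cl:
  assumes w: "\<And>n. w n \<in> L2 M" "w0 \<in> L2 M" and G: "G \<in> L2 M" and c: "cl M w w0"
    and bnd: "\<And>n x. x \<in> space M \<Longrightarrow> \<bar>w n x\<bar> \<le> G x" and EB: "\<And>n. E (w n) \<le> B"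
  shows "E w0 \<le> B"
proof -
  obtain r where r: "strict_mono r" "AE x in M. (\<lambda>n. w (r n) x) \<longlonglongrightarrow> w0 x"
    using ae_subseq[OF c L2_measurable[OF w(1)] L2_measurable[OF w(2)]] by blast
  show ?thesis
    by (rule E_lsc_ae[of "\<lambda>n. w (r n)", OF w(1) w(2) G r(2) bnd EB])
qed

end

definition Pz :: "'a measure \<Rightarrow> (('a \<Rightarrow> real) \<Rightarrow> ennreal) \<Rightarrow> ('a \<Rightarrow> real) \<Rightarrow> bool" where
  "Pz M E g \<longleftrightarrow> (\<forall>d>0. \<exists>u. (\<forall>n. u n \<in> L2 M) \<and> cl M u g \<and> (\<forall>n. E (u n) \<le> ennreal d))"

context sndf begin

lemma Pz_limit:
  assumes P: "\<And>k. Pz M E (s k)" and c: "cl M s g"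
    and ms: "\<And>k. s k \<in> borel_measurable M" and mg: "g \<in> borel_measurable M"
  shows "Pz M E g"
  unfolding Pz_def
proof (intro allI impI)
  fix d :: real assume d: "0 < d"
  have "\<forall>k. \<exists>u. (\<forall>n. u n \<in> L2 M) \<and> cl M u (s k) \<and> (\<forall>n. E (u n) \<le> ennreal d)"
    using P d unfolding Pz_def by blast
  from choice[OF this] obtain U where U: "\<And>k n. U k n \<in> L2 M" "\<And>k. cl M (U k) (s k)"
    "\<And>k n. E (U k n) \<le> ennreal d" by blast
  have mU: "U k n \<in> borel_measurable M" for k n by (rule L2_measurable[OF U(1)])
  obtain A where Am: "\<And>i. A i \<in> sets M" and Au: "(\<Union>i. A i) = space M"
    and Af: "\<And>i. emeasure M (A i) < \<infinity>" and Ai: "incseq A"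
    by (rule exhaust) blast
  have "\<exists>N. \<forall>n\<ge>N. emeasure M {x\<in>A k. inverse (real (Suc k)) < \<bar>U k n x - s k x\<bar>} < ennreal (inverse (real (Suc k)))" for k
    by (rule cl_eventually[OF U(2) Am Af]) simp_all
  then obtain N where N: "\<And>k. emeasure M {x\<in>A k. inverse (real (Suc k)) < \<bar>U k (N k) x - s k x\<bar>} < ennreal (inverse (real (Suc k)))"
    by (metis order_refl)
  define v where "v k = U k (N k)" for k
  show "\<exists>u. (\<forall>n. u n \<in> L2 M) \<and> cl M u g \<and> (\<forall>n. E (u n) \<le> ennreal d)"
  proof (intro exI conjI allI)
    show "v n \<in> L2 M" for n unfolding v_def by (rule U(1))
    show "E (v n) \<le> ennreal d" for n unfolding v_def by (rule U(3))
    show "cl M v g"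
      unfolding conv_loc_meas_def
    proof (intro ballI impI allI)
      fix B :: "'a set" and e :: real
      assume B: "B \<in> sets M" "emeasure M B < \<infinity>" and e: "0 < e"
      have e2: "0 < e / 2" using e by simp
      define a1 where "a1 k = emeasure M (B - A k)" for k
      define a2 where "a2 k = ennreal (inverse (real (Suc k)))" for k
      define a3 where "a3 k = emeasure M {x\<in>B. e / 2 < \<bar>s k x - g x\<bar>}" for k
      have t1: "a1 \<longlonglongrightarrow> 0"
      proof -
        have "(\<lambda>k. emeasure M (B - A k)) \<longlonglongrightarrow> emeasure M (\<Inter>k. B - A k)"
        proof (rule Lim_emeasure_decseq)
          show "range (\<lambda>k. B - A k) \<subseteq> sets M" using B(1) Am by auto
          show "decseq (\<lambda>k. B - A k)" using Ai by (auto simp: incseq_def decseq_def)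
          show "emeasure M (B - A k) \<noteq> \<infinity>" for k
          proof -
            have "emeasure M (B - A k) \<le> emeasure M B" by (rule emeasure_mono[OF _ B(1)]) auto
            then show ?thesis using B(2) by (auto simp: top_unique)
          qed
        qed
        moreover have "(\<Inter>k. B - A k) = {}"
          using sets.sets_into_space[OF B(1)] Au by auto
        ultimately show ?thesis unfolding a1_def by (simp only: emeasure_empty)
      qed
      have t2: "a2 \<longlonglongrightarrow> 0"
        unfolding a2_def using tendsto_ennrealI[OF LIMSEQ_inverse_real_of_nat] by simp
      have t3: "a3 \<longlonglongrightarrow> 0"
        unfolding a3_def using c B e2 unfolding conv_loc_meas_def by blast
      obtain K where K: "inverse (real (Suc K)) < e / 2" using reals_Archimedean[OF e2] by blast
      have bound: "emeasure M {x\<in>B. e < \<bar>v k x - g x\<bar>} \<le> a1 k + a2 k + a3 k" if k: "k \<ge> K" for k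
      proof -
        have ik: "inverse (real (Suc k)) \<le> inverse (real (Suc K))"
          using k by (simp add: le_imp_inverse_le)
        let ?S1 = "B - A k" and ?S2 = "{x\<in>A k. inverse (real (Suc k)) < \<bar>U k (N k) x - s k x\<bar>}"
          and ?S3 = "{x\<in>B. e / 2 < \<bar>s k x - g x\<bar>}"
        have S1: "?S1 \<in> sets M" using B(1) Am by auto
        have S2: "?S2 \<in> sets M" by (rule meas_set2[OF Am mU ms])
        have S3: "?S3 \<in> sets M" by (rule meas_set2[OF B(1) ms mg])
        have sub: "{x\<in>B. e < \<bar>v k x - g x\<bar>} \<subseteq> ?S1 \<union> ?S2 \<union> ?S3"
        proof
          fix x assume x: "x \<in> {x\<in>B. e < \<bar>v k x - g x\<bar>}"
          show "x \<in> ?S1 \<union> ?S2 \<union> ?S3"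
          proof (rule ccontr)
            assume "x \<notin> ?S1 \<union> ?S2 \<union> ?S3"
            then have xA: "x \<in> A k" and d2: "\<bar>U k (N k) x - s k x\<bar> \<le> inverse (real (Suc k))"
              and d3: "\<bar>s k x - g x\<bar> \<le> e / 2" using x by auto
            have "\<bar>v k x - g x\<bar> \<le> \<bar>U k (N k) x - s k x\<bar> + \<bar>s k x - g x\<bar>"
              unfolding v_def using abs_triangle_ineq[of "U k (N k) x - s k x" "s k x - g x"] by simp
            moreover have "e < \<bar>v k x - g x\<bar>" using x by blast
            ultimately show False using d2 d3 ik K by linarith
          qed
        qed
        have "emeasure M {x\<in>B. e < \<bar>v k x - g x\<bar>} \<le> emeasure M (?S1 \<union> ?S2 \<union> ?S3)"
          by (rule emeasure_mono[OF sub]) (intro sets.Un S1 S2 S3)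
        also have "\<dots> \<le> emeasure M (?S1 \<union> ?S2) + emeasure M ?S3"
          by (rule emeasure_subadditive) (intro sets.Un S1 S2, rule S3)
        also have "emeasure M (?S1 \<union> ?S2) \<le> emeasure M ?S1 + emeasure M ?S2"
          by (rule emeasure_subadditive[OF S1 S2])
        also have "emeasure M ?S2 \<le> a2 k" unfolding a2_def by (rule less_imp_le[OF N])
        finally show ?thesis unfolding a1_def a3_def by (simp add: add_mono)
      qed
      have T: "(\<lambda>k. a1 k + a2 k + a3 k) \<longlonglongrightarrow> 0"
        using tendsto_add[OF tendsto_add[OF t1 t2] t3] by simp
      have ev1: "eventually (\<lambda>k. 0 \<le> emeasure M {x\<in>B. e < \<bar>v k x - g x\<bar>}) sequentially" by simp
      have ev2: "eventually (\<lambda>k. emeasure M {x\<in>B. e < \<bar>v k x - g x\<bar>} \<le> a1 k + a2 k + a3 k) sequentially"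
        unfolding eventually_sequentially using bound by blast
      show "(\<lambda>k. emeasure M {x\<in>B. e < \<bar>v k x - g x\<bar>}) \<longlonglongrightarrow> 0"
        by (rule tendsto_sandwich[OF ev1 ev2 tendsto_const T])
    qed
  qed
qed

lemma Pz_limit_pw:
  assumes P: "\<And>k. Pz M E (s k)" and lim: "\<And>x. x \<in> space M \<Longrightarrow> (\<lambda>k. s k x) \<longlonglongrightarrow> g x"
    and ms: "\<And>k. s k \<in> borel_measurable M" and mg: "g \<in> borel_measurable M"
  shows "Pz M E g"
  by (rule Pz_limit[OF P cl_pointwise[OF lim ms mg] ms mg])

end



lemma lip_meas:
  fixes C :: "real \<Rightarrow> real" and g :: "'a \<Rightarrow> real"
  assumes "g \<in> borel_measurable M" "\<And>s t. \<bar>C s - C t\<bar> \<le> \<bar>s - t\<bar>"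
  shows "(\<lambda>x. C (g x)) \<in> borel_measurable M"
proof -
  have "continuous_on UNIV C"
    by (rule lipschitz_on_continuous_on[of 1]) (auto simp: lipschitz_on_def dist_real_def assms(2))
  then show ?thesis by (rule borel_measurable_continuous_on[OF _ assms(1)])
qed

lemma ennreal_eps_zero:
  assumes "\<And>d::real. 0 < d \<Longrightarrow> x \<le> ennreal d"
  shows "x = 0"
proof -
  have "x \<le> 0" by (rule ennreal_le_epsilon) (use assms in simp)
  then show ?thesis by simp
qed

lemma half_half: "0 \<le> d \<Longrightarrow> ennreal (1/2) * ennreal d + ennreal (1/2) * ennreal d = ennreal d"
proof -
  assume d: "0 \<le> d"
  have "ennreal (1/2) * ennreal d = ennreal (d/2)" using d by (subst ennreal_mult[symmetric]) simp_all
  moreover have "ennreal (d/2) + ennreal (d/2) = ennreal (d/2 + d/2)" using d by (subst ennreal_plus) simp_all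
  ultimately show ?thesis by simp
qed

definition Kz :: "'a measure \<Rightarrow> (('a \<Rightarrow> real) \<Rightarrow> ennreal) \<Rightarrow> ('a \<Rightarrow> real) \<Rightarrow> bool" where
  "Kz M E g \<longleftrightarrow> (\<forall>t. Pz M E (\<lambda>x. t * g x))"

lemma max_eq: "max a b = 1/2 * ((a + b) + \<bar>a + (-1) * b\<bar>)" for a b :: real
  by (cases "a \<le> b") (simp_all add: max_def abs_if)

context sndf begin

lemma Pz_zero: "Pz M E (\<lambda>x. 0)"
  unfolding Pz_def
proof (intro allI impI)
  fix d :: real assume d: "0 < d"
  have "cl M (\<lambda>n x. 0) (\<lambda>x. 0)" by (rule cl_const)
  then show "\<exists>u. (\<forall>n. u n \<in> L2 M) \<and> cl M u (\<lambda>x. 0) \<and> (\<forall>n. E (u n) \<le> ennreal d)"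
    by (intro exI[of _ "\<lambda>n x. 0"]) (simp add: L2_zero E_zero)
qed

lemma Pz_ae:
  assumes "Pz M E g" "AE x in M. g x = h x" "g \<in> borel_measurable M" "h \<in> borel_measurable M"
  shows "Pz M E h"
  unfolding Pz_def
proof (intro allI impI)
  fix d :: real assume d: "0 < d"
  obtain u where u: "\<And>n. u n \<in> L2 M" "cl M u g" "\<And>n. E (u n) \<le> ennreal d"
    using assms(1) d unfolding Pz_def by blast
  have "cl M u h" by (rule cl_ae[OF u(2) assms(2) L2_measurable[OF u(1)] assms(3,4)])
  then show "\<exists>u. (\<forall>n. u n \<in> L2 M) \<and> cl M u h \<and> (\<forall>n. E (u n) \<le> ennreal d)"
    using u by blast
qed

lemma Pz_space:
  assumes "Pz M E g" "\<And>x. x \<in> space M \<Longrightarrow> g x = h x" "g \<in> borel_measurable M" "h \<in> borel_measurable M"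
  shows "Pz M E h"
  by (rule Pz_ae[OF assms(1) AE_I2[OF assms(2)] assms(3,4)])

lemma Pz_contr:
  assumes P: "Pz M E g" and mg: "g \<in> borel_measurable M"
    and C: "\<And>s t. \<bar>C s - C t\<bar> \<le> \<bar>s - t\<bar>" "C 0 = 0"
  shows "Pz M E (\<lambda>x. C (g x))"
  unfolding Pz_def
proof (intro allI impI)
  fix d :: real assume d: "0 < d"
  obtain u where u: "\<And>n. u n \<in> L2 M" "cl M u g" "\<And>n. E (u n) \<le> ennreal d"
    using P d unfolding Pz_def by blast
  show "\<exists>u. (\<forall>n. u n \<in> L2 M) \<and> cl M u (\<lambda>x. C (g x)) \<and> (\<forall>n. E (u n) \<le> ennreal d)"
  proof (intro exI[of _ "\<lambda>n x. C (u n x)"] conjI allI)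
    show "(\<lambda>x. C (u n x)) \<in> L2 M" for n by (rule L2_lip[OF u(1) C])
    show "E (\<lambda>x. C (u n x)) \<le> ennreal d" for n
      using E_contr[OF u(1) C, of n] u(3)[of n] by (rule order_trans)
    show "cl M (\<lambda>n x. C (u n x)) (\<lambda>x. C (g x))"
    proof (rule cl_lip[OF u(2) zero_le_one L2_measurable[OF u(1)] mg])
      show "(\<lambda>x. C (u n x)) \<in> borel_measurable M" for n by (rule lip_meas[OF L2_measurable[OF u(1)] C(1)])
      show "(\<lambda>x. C (g x)) \<in> borel_measurable M" by (rule lip_meas[OF mg C(1)])
      show "\<bar>C (u n x) - C (g x)\<bar> \<le> 1 * \<bar>u n x - g x\<bar>" for n x using C(1) by simp
    qed
  qed
qed

lemma Pz_mid:
  assumes Pa: "Pz M E (\<lambda>x. 2 * a x)" and Pb: "Pz M E (\<lambda>x. 2 * b x)"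
    and ma: "a \<in> borel_measurable M" and mb: "b \<in> borel_measurable M"
  shows "Pz M E (\<lambda>x. a x + b x)"
  unfolding Pz_def
proof (intro allI impI)
  fix d :: real assume d: "0 < d"
  obtain u where u: "\<And>n. u n \<in> L2 M" "cl M u (\<lambda>x. 2 * a x)" "\<And>n. E (u n) \<le> ennreal d"
    using Pa d unfolding Pz_def by blast
  obtain v where v: "\<And>n. v n \<in> L2 M" "cl M v (\<lambda>x. 2 * b x)" "\<And>n. E (v n) \<le> ennreal d"
    using Pb d unfolding Pz_def by blast
  have m2a: "(\<lambda>x. 2 * a x) \<in> borel_measurable M" and m2b: "(\<lambda>x. 2 * b x) \<in> borel_measurable M"
    using ma mb by simp_all
  show "\<exists>u. (\<forall>n. u n \<in> L2 M) \<and> cl M u (\<lambda>x. a x + b x) \<and> (\<forall>n. E (u n) \<le> ennreal d)"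
  proof (intro exI[of _ "\<lambda>n x. (u n x + v n x) / 2"] conjI allI)
    show "(\<lambda>x. (u n x + v n x) / 2) \<in> L2 M" for n
      using L2_scale[OF L2_add[OF u(1) v(1)], of "1/2"] by simp
    show "E (\<lambda>x. (u n x + v n x) / 2) \<le> ennreal d" for n
    proof -
      have "E (\<lambda>x. (u n x + v n x) / 2) \<le> ennreal (1/2) * E (u n) + ennreal (1/2) * E (v n)"
        by (rule E_mid[OF u(1) v(1)])
      also have "\<dots> \<le> ennreal (1/2) * ennreal d + ennreal (1/2) * ennreal d"
        by (intro add_mono mult_left_mono u(3) v(3)) simp_all
      also have "\<dots> = ennreal d" using d by (intro half_half) simp
      finally show ?thesis .
    qed
    have "cl M (\<lambda>n x. u n x + v n x) (\<lambda>x. 2 * a x + 2 * b x)"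
      by (rule cl_add[OF u(2) v(2) L2_measurable[OF u(1)] m2a L2_measurable[OF v(1)] m2b])
    then have "cl M (\<lambda>n x. (1/2) * (u n x + v n x)) (\<lambda>x. (1/2) * (2 * a x + 2 * b x))"
      by (rule cl_scale) (use L2_measurable[OF u(1)] L2_measurable[OF v(1)] m2a m2b in simp_all)
    moreover have "(\<lambda>n x. (1/2) * (u n x + v n x)) = (\<lambda>n x. (u n x + v n x) / 2)" by simp
    moreover have "(\<lambda>x. (1/2) * (2 * a x + 2 * b x)) = (\<lambda>x. a x + b x)" by (simp add: distrib_left)
    ultimately show "cl M (\<lambda>n x. (u n x + v n x) / 2) (\<lambda>x. a x + b x)" by simp
  qed
qed

lemma Kz_add:
  assumes "Kz M E a" "Kz M E b" "a \<in> borel_measurable M" "b \<in> borel_measurable M"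
  shows "Kz M E (\<lambda>x. a x + b x)"
  unfolding Kz_def
proof
  fix t :: real
  have "Pz M E (\<lambda>x. (2 * t) * a x)" "Pz M E (\<lambda>x. (2 * t) * b x)" using assms(1,2) unfolding Kz_def by blast+
  then have p: "Pz M E (\<lambda>x. 2 * (t * a x))" "Pz M E (\<lambda>x. 2 * (t * b x))" by (simp_all add: mult.assoc)
  have "Pz M E (\<lambda>x. t * a x + t * b x)"
    by (rule Pz_mid[OF p]) (use assms(3,4) in simp_all)
  then show "Pz M E (\<lambda>x. t * (a x + b x))" by (simp add: distrib_left)
qed

lemma Kz_scale:
  assumes "Kz M E g" shows "Kz M E (\<lambda>x. c * g x)"
  unfolding Kz_def
proof
  fix t :: real
  have "Pz M E (\<lambda>x. (t * c) * g x)" using assms unfolding Kz_def by blast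
  then show "Pz M E (\<lambda>x. t * (c * g x))" by (simp add: mult.assoc)
qed

lemma Kz_abs:
  assumes "Kz M E g" "g \<in> borel_measurable M" shows "Kz M E (\<lambda>x. \<bar>g x\<bar>)"
  unfolding Kz_def
proof
  fix t :: real
  define C where "C s = (if 0 \<le> t then \<bar>s\<bar> else - \<bar>s\<bar>)" for s :: real
  have C1: "\<bar>C s - C u\<bar> \<le> \<bar>s - u\<bar>" for s u
    unfolding C_def using abs_triangle_ineq3[of s u] by (auto simp: abs_minus_commute)
  have C0: "C 0 = 0" by (simp add: C_def)
  have "Pz M E (\<lambda>x. t * g x)" using assms unfolding Kz_def by blast
  then have "Pz M E (\<lambda>x. C (t * g x))" by (rule Pz_contr[OF _ _ C1 C0]) (use assms(2) in simp)
  moreover have "(\<lambda>x. C (t * g x)) = (\<lambda>x. t * \<bar>g x\<bar>)"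
    by (rule ext) (simp add: C_def abs_mult)
  ultimately show "Pz M E (\<lambda>x. t * \<bar>g x\<bar>)" by simp
qed

lemma Kz_max:
  assumes "Kz M E a" "Kz M E b" and ma: "a \<in> borel_measurable M" and mb: "b \<in> borel_measurable M"
  shows "Kz M E (\<lambda>x. max (a x) (b x))"
proof -
  have k1: "Kz M E (\<lambda>x. a x + b x)" by (rule Kz_add[OF assms])
  have k2: "Kz M E (\<lambda>x. a x + (-1) * b x)"
    by (rule Kz_add[OF assms(1) Kz_scale[OF assms(2)] ma]) (use mb in simp)
  have k3: "Kz M E (\<lambda>x. \<bar>a x + (-1) * b x\<bar>)" by (rule Kz_abs[OF k2]) (use ma mb in simp)
  have k4: "Kz M E (\<lambda>x. (a x + b x) + \<bar>a x + (-1) * b x\<bar>)"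
    by (rule Kz_add[OF k1 k3]) (use ma mb in simp_all)
  have "Kz M E (\<lambda>x. 1/2 * ((a x + b x) + \<bar>a x + (-1) * b x\<bar>))" by (rule Kz_scale[OF k4])
  then show ?thesis by (simp only: max_eq[symmetric])
qed

lemma Kz_space:
  assumes "Kz M E g" "\<And>x. x \<in> space M \<Longrightarrow> g x = h x" "g \<in> borel_measurable M" "h \<in> borel_measurable M"
  shows "Kz M E h"
  unfolding Kz_def
proof
  fix t :: real
  have "Pz M E (\<lambda>x. t * g x)" using assms(1) unfolding Kz_def by blast
  then show "Pz M E (\<lambda>x. t * h x)"
    by (rule Pz_space) (use assms(2-4) in simp_all)
qed

lemma Kz_ae:
  assumes "Kz M E g" "AE x in M. g x = h x" "g \<in> borel_measurable M" "h \<in> borel_measurable M"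
  shows "Kz M E h"
  unfolding Kz_def
proof
  fix t :: real
  have "Pz M E (\<lambda>x. t * g x)" using assms(1) unfolding Kz_def by blast
  moreover have "AE x in M. t * g x = t * h x" using assms(2) by eventually_elim simp
  ultimately show "Pz M E (\<lambda>x. t * h x)"
    by (rule Pz_ae) (use assms(3-4) in simp_all)
qed

lemma Le_norm_Kz:
  assumes h: "h \<in> borel_measurable M" and L: "Le_norm M E h = 0"
  shows "Kz M E h"
  unfolding Kz_def
proof
  fix t :: real
  show "Pz M E (\<lambda>x. t * h x)"
  proof (cases "t = 0")
    case True then show ?thesis using Pz_zero by simp
  next
    case False
    then have at: "0 < \<bar>t\<bar>" by simp
    show ?thesis unfolding Pz_def
    proof (intro allI impI)
      fix d :: real assume d: "0 < d"
      define \<eta> where "\<eta> = min (d/2) 1 / \<bar>t\<bar>"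
      have \<eta>: "0 < \<eta>" using d at by (simp add: \<eta>_def)
      have "Le_norm M E h < ennreal \<eta>" using L \<eta> by simp
      then obtain l where l: "0 < l" "ennreal l < ennreal \<eta>" "E_e M E (\<lambda>x. h x / l) \<le> 1"
        unfolding Le_norm_def Inf_less_iff by blast
      have l\<eta>: "l < \<eta>" using l(2) l(1) by (subst (asm) ennreal_less_iff) simp_all
      have "E_e M E (\<lambda>x. h x / l) < 2" using l(3) by (rule le_less_trans) simp
      then obtain fs where fs: "\<forall>n. fs n \<in> borel_measurable M" "cl M fs (\<lambda>x. h x / l)"
          "liminf (\<lambda>n. ext_L2 M E (fs n)) < 2"
        unfolding E_e_def Inf_less_iff by blast
      have inf: "infinite {n. ext_L2 M E (fs n) < 2}"
      proof
        assume fin: "finite {n. ext_L2 M E (fs n) < 2}"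
        have "eventually (\<lambda>n. \<not> ext_L2 M E (fs n) < 2) cofinite"
          using fin by (simp add: eventually_cofinite)
        then have "eventually (\<lambda>n. 2 \<le> ext_L2 M E (fs n)) sequentially"
          by (simp add: cofinite_eq_sequentially not_less)
        then have "2 \<le> liminf (\<lambda>n. ext_L2 M E (fs n))" by (rule Liminf_bounded)
        with fs(3) show False by simp
      qed
      obtain r :: "nat \<Rightarrow> nat" where r1: "strict_mono r" and r2: "\<forall>n. r n \<in> {n. ext_L2 M E (fs n) < 2}"
        using infinite_enumerate[OF inf] by (elim exE conjE)
      have r: "strict_mono r" "\<And>n. ext_L2 M E (fs (r n)) < 2" using r1 r2 by auto
      have L2r: "fs (r n) \<in> L2 M" for n
      proof (rule ccontr)
        assume "fs (r n) \<notin> L2 M"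
        then have "ext_L2 M E (fs (r n)) = \<infinity>" by (simp add: ext_L2_def)
        with r(2)[of n] show False by simp
      qed
      have Er: "E (fs (r n)) < 2" for n using r(2)[of n] L2r[of n] by (simp add: ext_L2_def)
      define c where "c = t * l"
      have cl: "\<bar>c\<bar> = \<bar>t\<bar> * l" using l(1) by (simp add: c_def abs_mult)
      have "\<bar>t\<bar> * l < \<bar>t\<bar> * \<eta>" using l\<eta> at by simp
      also have "\<bar>t\<bar> * \<eta> = min (d/2) 1" using at by (simp add: \<eta>_def)
      finally have cm: "\<bar>c\<bar> < min (d/2) 1" using cl by simp
      have c1: "\<bar>c\<bar> \<le> 1" and c2: "\<bar>c\<bar> * 2 \<le> d" using cm by linarith+
      have mhl: "(\<lambda>x. h x / l) \<in> borel_measurable M" using h by simp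
      show "\<exists>u. (\<forall>n. u n \<in> L2 M) \<and> cl M u (\<lambda>x. t * h x) \<and> (\<forall>n. E (u n) \<le> ennreal d)"
      proof (intro exI[of _ "\<lambda>n x. c * fs (r n) x"] conjI allI)
        show "(\<lambda>x. c * fs (r n) x) \<in> L2 M" for n by (rule L2_scale[OF L2r])
        have "cl M (\<lambda>n. fs (r n)) (\<lambda>x. h x / l)" by (rule cl_subseq[OF fs(2) r(1)])
        then have "cl M (\<lambda>n x. c * fs (r n) x) (\<lambda>x. c * (h x / l))"
          by (rule cl_scale) (use fs(1) mhl in simp_all)
        moreover have "(\<lambda>x. c * (h x / l)) = (\<lambda>x. t * h x)" using l(1) by (simp add: c_def)
        ultimately show "cl M (\<lambda>n x. c * fs (r n) x) (\<lambda>x. t * h x)" by simp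
        show "E (\<lambda>x. c * fs (r n) x) \<le> ennreal d" for n
        proof -
          have "E (\<lambda>x. c * fs (r n) x) \<le> ennreal \<bar>c\<bar> * E (fs (r n))" by (rule E_scale_abs[OF L2r c1])
          also have "\<dots> \<le> ennreal \<bar>c\<bar> * 2" using Er[of n] by (intro mult_left_mono) simp_all
          also have "ennreal \<bar>c\<bar> * 2 = ennreal (\<bar>c\<bar> * 2)" by (subst ennreal_mult) simp_all
          also have "\<dots> \<le> ennreal d" using c2 by (rule ennreal_leI)
          finally show ?thesis .
        qed
      qed
    qed
  qed
qed

lemma E_e_zero:
  assumes "Pz M E g" "g \<in> borel_measurable M"
  shows "E_e M E g = 0"
proof (rule ennreal_eps_zero)
  fix d :: real assume d: "0 < d"
  obtain u where u: "\<And>n. u n \<in> L2 M" "cl M u g" "\<And>n. E (u n) \<le> ennreal d"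
    using assms(1) d unfolding Pz_def by blast
  have "liminf (\<lambda>n. ext_L2 M E (u n)) \<in> {liminf (\<lambda>n. ext_L2 M E (fs n)) | fs. (\<forall>n. fs n \<in> borel_measurable M) \<and> cl M fs g}"
    using u(1,2) L2_measurable by blast
  then have "E_e M E g \<le> liminf (\<lambda>n. ext_L2 M E (u n))" unfolding E_e_def by (rule Inf_lower)
  also have "\<dots> \<le> ennreal d" using u(1,3) by (intro liminf_le_bound) (simp add: ext_L2_def)
  finally show "E_e M E g \<le> ennreal d" .
qed

lemma Kz_Le_norm:
  assumes K: "Kz M E h" and h: "h \<in> borel_measurable M"
  shows "Le_norm M E h = 0"
  unfolding Le_norm_def
proof (rule ennreal_eps_zero)
  fix d :: real assume d: "0 < d"
  have "Pz M E (\<lambda>x. (1/d) * h x)" using K unfolding Kz_def by blast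
  moreover have "(\<lambda>x. (1/d) * h x) = (\<lambda>x. h x / d)" by simp
  ultimately have "Pz M E (\<lambda>x. h x / d)" by simp
  then have "E_e M E (\<lambda>x. h x / d) = 0" by (rule E_e_zero) (use h in simp)
  then have "ennreal d \<in> {ennreal l | l. l > 0 \<and> E_e M E (\<lambda>x. h x / l) \<le> 1}" using d by auto
  then show "Inf {ennreal l | l. l > 0 \<and> E_e M E (\<lambda>x. h x / l) \<le> 1} \<le> ennreal d" by (rule Inf_lower)
qed

end



lemma clamp_lip: "\<bar>max (min g a) (- a) - max (min g b) (- b)\<bar> \<le> \<bar>a - (b::real)\<bar>"
  by (auto simp: min_def max_def abs_if)

lemma clamp_bound: "0 \<le> a \<Longrightarrow> \<bar>max (min g a) (- a)\<bar> \<le> \<bar>(g::real)\<bar>"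
  by (auto simp: min_def max_def abs_if)

lemma min_abs_bound: "\<bar>min (g::real) w\<bar> \<le> \<bar>g\<bar> + \<bar>w\<bar>"
  by (auto simp: min_def abs_if)

lemma abs_lip: "\<bar>\<bar>s\<bar> - \<bar>u\<bar>\<bar> \<le> \<bar>s - (u::real)\<bar>"
  by (rule abs_triangle_ineq3)

context sndf begin

lemma L2_abs: "g \<in> L2 M \<Longrightarrow> (\<lambda>x. \<bar>g x\<bar>) \<in> L2 M"
  by (rule L2_lip[of g M abs]) (simp_all add: abs_lip)

lemma invariant_step1:
  assumes B: "B \<in> sets M" and K: "Kz M E (indicator B)" and g: "g \<in> L2 M" and t: "0 \<le> t"
  shows "E (\<lambda>x. indicator B x * max (min (g x) t) (- t)) \<le> E g"
proof -
  have mg: "g \<in> borel_measurable M" by (rule L2_measurable[OF g])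
  have gA: "(\<lambda>x. \<bar>g x\<bar>) \<in> L2 M" by (rule L2_abs[OF g])
  define z0 where "z0 = (\<lambda>x. max (min (g x) (t * indicator B x)) (- (t * indicator B x)))"
  have mi: "(\<lambda>x. t * indicator B x) \<in> borel_measurable M" using B by simp
  have mz0: "z0 \<in> borel_measurable M" unfolding z0_def using mg mi by measurable
  have z0L: "z0 \<in> L2 M"
    by (rule L2_dom[OF mz0 gA]) (simp add: z0_def clamp_bound t)
  have "E z0 \<le> E g"
  proof (rule ennreal_le_epsilon)
    fix e :: real assume e: "0 < e"
    define d where "d = e / 2"
    have d: "0 < d" using e by (simp add: d_def)
    have "Pz M E (\<lambda>x. t * indicator B x)" using K unfolding Kz_def by blast
    then obtain u where u: "\<And>n. u n \<in> L2 M" "cl M u (\<lambda>x. t * indicator B x)" "\<And>n. E (u n) \<le> ennreal d"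
      using d unfolding Pz_def by blast
    have mu: "u n \<in> borel_measurable M" for n by (rule L2_measurable[OF u(1)])
    define w where "w n = (\<lambda>x. \<bar>u n x\<bar>)" for n
    have wL: "w n \<in> L2 M" for n unfolding w_def by (rule L2_abs[OF u(1)])
    have mw: "w n \<in> borel_measurable M" for n by (rule L2_measurable[OF wL])
    have Ew: "E (w n) \<le> ennreal d" for n
      unfolding w_def using E_contr[OF u(1), of abs n] u(3)[of n] by (simp add: abs_lip)
    have cw: "cl M w (\<lambda>x. t * indicator B x)"
    proof (rule cl_lip[OF u(2) zero_le_one mu mi mw mi])
      fix n x
      have "\<bar>t * indicator B x\<bar> = t * indicator B x" using t by simp
      then show "\<bar>w n x - t * indicator B x\<bar> \<le> 1 * \<bar>u n x - t * indicator B x\<bar>"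
        unfolding w_def using abs_lip[of "u n x" "t * indicator B x"] by simp
    qed
    define z where "z n = (\<lambda>x. max (min (g x) (w n x)) (- w n x))" for n
    have mz: "z n \<in> borel_measurable M" for n unfolding z_def using mg mw[of n] by measurable
    have zL: "z n \<in> L2 M" for n
      by (rule L2_dom[OF mz gA]) (simp add: z_def w_def clamp_bound)
    have cz: "cl M z z0"
    proof (rule cl_lip[OF cw zero_le_one mw mi mz mz0])
      fix n x
      show "\<bar>z n x - z0 x\<bar> \<le> 1 * \<bar>w n x - t * indicator B x\<bar>"
        unfolding z_def z0_def using clamp_lip[of "g x" "w n x" "t * indicator B x"] by simp
    qed
    have Ez: "E (z n) \<le> E g + ennreal e" for n
    proof -
      have mL: "(\<lambda>x. min (g x) (w n x)) \<in> L2 M"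
      proof (rule L2_dom[OF _ L2_add[OF gA L2_abs[OF wL]]])
        show "(\<lambda>x. min (g x) (w n x)) \<in> borel_measurable M" using mg mw[of n] by measurable
        show "\<bar>min (g x) (w n x)\<bar> \<le> \<bar>\<bar>g x\<bar> + \<bar>w n x\<bar>\<bar>" for x
          using min_abs_bound[of "g x" "w n x"] by simp
      qed
      have nL: "(\<lambda>x. - w n x) \<in> L2 M" by (rule L2_uminus[OF wL])
      have "E (z n) \<le> E (\<lambda>x. min (g x) (w n x)) + E (\<lambda>x. - w n x)"
        unfolding z_def by (rule E_max[OF mL nL])
      also have "E (\<lambda>x. - w n x) = E (w n)" by (rule E_uminus[OF wL])
      also have "E (\<lambda>x. min (g x) (w n x)) \<le> E g + E (w n)" by (rule E_min[OF g wL])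
      also have "E g + E (w n) + E (w n) \<le> E g + ennreal d + ennreal d"
        by (intro add_mono order_refl Ew)
      also have "E g + ennreal d + ennreal d = E g + ennreal e"
      proof -
        have "ennreal d + ennreal d = ennreal e" using d by (simp add: d_def flip: ennreal_plus)
        then show ?thesis by (simp add: add.assoc)
      qed
      finally show ?thesis by (simp add: add.assoc)
    qed
    show "E z0 \<le> E g + ennreal e"
      by (rule E_lsc_cl[OF zL z0L gA cz _ Ez]) (simp add: z_def w_def clamp_bound)
  qed
  moreover have "z0 = (\<lambda>x. indicator B x * max (min (g x) t) (- t))"
    by (rule ext) (simp add: z0_def indicator_def min_def max_def)
  ultimately show ?thesis by simp
qed

lemma invariant_of_Kz:
  assumes B: "B \<in> sets M" and K: "Kz M E (indicator B)"
  shows "E_invariant M E B"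
  unfolding E_invariant_def
proof (intro conjI ballI B)
  fix g assume g: "g \<in> L2 M"
  have mg: "g \<in> borel_measurable M" by (rule L2_measurable[OF g])
  have gA: "(\<lambda>x. \<bar>g x\<bar>) \<in> L2 M" by (rule L2_abs[OF g])
  define h where "h m = (\<lambda>x. indicator B x * max (min (g x) (real m)) (- real m))" for m :: nat
  have mh: "h m \<in> borel_measurable M" for m unfolding h_def using mg B by measurable
  have hb: "\<bar>h m x\<bar> \<le> \<bar>g x\<bar>" for m x
  proof -
    have "\<bar>max (min (g x) (real m)) (- real m)\<bar> \<le> \<bar>g x\<bar>" by (rule clamp_bound) simp
    then show ?thesis by (simp add: h_def indicator_def)
  qed
  have hL: "h m \<in> L2 M" for m by (rule L2_dom[OF mh gA]) (simp add: hb)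
  have mt: "(\<lambda>x. indicator B x * g x) \<in> borel_measurable M" using mg B by measurable
  have tL: "(\<lambda>x. indicator B x * g x) \<in> L2 M"
    by (rule L2_dom[OF mt gA]) (simp add: indicator_def)
  have lim: "(\<lambda>m. h m x) \<longlonglongrightarrow> indicator B x * g x" for x
  proof (rule tendsto_eventually)
    obtain m0 :: nat where m0: "\<bar>g x\<bar> \<le> real m0" using real_arch_simple by blast
    show "eventually (\<lambda>m. h m x = indicator B x * g x) sequentially"
      unfolding eventually_sequentially
    proof (intro exI allI impI)
      fix m assume "m0 \<le> m"
      then have "\<bar>g x\<bar> \<le> real m" using m0 by linarith
      then have "- real m \<le> g x" "g x \<le> real m" by (simp_all add: abs_le_iff)
      then have "max (min (g x) (real m)) (- real m) = g x" by (auto simp: min_def max_def)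
      then show "h m x = indicator B x * g x" by (simp add: h_def)
    qed
  qed
  show "E (\<lambda>x. indicator B x * g x) \<le> E g"
  proof (rule E_lsc_ae[OF hL tL gA])
    show "AE x in M. (\<lambda>m. h m x) \<longlonglongrightarrow> indicator B x * g x" by (rule AE_I2) (rule lim)
    show "\<bar>h m x\<bar> \<le> \<bar>g x\<bar>" for m x by (rule hb)
    show "E (h m) \<le> E g" for m unfolding h_def by (rule invariant_step1[OF B K g]) simp
  qed
qed

end



lemma clamp01_lip: "0 \<le> a \<Longrightarrow> \<bar>min (max s 0) a - min (max u 0) a\<bar> \<le> \<bar>s - (u::real)\<bar>"
  by (auto simp: min_def max_def abs_if)

lemma clamp_hom: "0 \<le> a \<Longrightarrow> min (max (a * y) 0) a = a * min (max y 0) (1::real)"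
proof -
  assume a: "0 \<le> a"
  show ?thesis
  proof (cases "y \<le> 0")
    case True
    then have "a * y \<le> 0" using a by (simp add: mult_nonneg_nonpos)
    then show ?thesis using True a by (simp add: max_def min_def)
  next
    case False
    show ?thesis
    proof (cases "y \<le> 1")
      case True
      have "a * y \<le> a" using True a by (simp add: mult_left_le)
      moreover have "0 \<le> a * y" using False a by simp
      ultimately show ?thesis using True False by (simp add: max_def min_def)
    next
      case False2: False
      have "a \<le> a * y" using False2 a by (simp add: mult_le_cancel_left1)
      then show ?thesis using False False2 a by (simp add: max_def min_def)
    qed
  qed
qed

context sndf begin

lemma Kz_zero: "Kz M E (\<lambda>x. 0)"
  unfolding Kz_def using Pz_zero by simp

lemma Kz_ind_inv:
  assumes K1: "Kz M E (\<lambda>x. 1)" and S: "S \<in> A_inv M E"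
  shows "Kz M E (indicator S)"
  unfolding Kz_def
proof
  fix t :: real
  have Sm: "S \<in> sets M" using S by (simp add: A_inv_def)
  have mi: "(\<lambda>x. t * indicator S x) \<in> borel_measurable M" using Sm by simp
  have inv: "E_invariant M E S \<or> E_invariant M E (space M - S)" using S by (simp add: A_inv_def)
  show "Pz M E (\<lambda>x. t * indicator S x)"
    unfolding Pz_def
  proof (intro allI impI)
    fix d :: real assume d: "0 < d"
    show "\<exists>u. (\<forall>n. u n \<in> L2 M) \<and> cl M u (\<lambda>x. t * indicator S x) \<and> (\<forall>n. E (u n) \<le> ennreal d)"
    proof (cases "E_invariant M E S")
      case True
      have "Pz M E (\<lambda>x. t * 1)" using K1 unfolding Kz_def by blast
      then obtain u where u: "\<And>n. u n \<in> L2 M" "cl M u (\<lambda>x. t * 1)" "\<And>n. E (u n) \<le> ennreal d"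
        using d unfolding Pz_def by blast
      have mu: "u n \<in> borel_measurable M" for n by (rule L2_measurable[OF u(1)])
      show ?thesis
      proof (intro exI[of _ "\<lambda>n x. indicator S x * u n x"] conjI allI)
        show wL: "(\<lambda>x. indicator S x * u n x) \<in> L2 M" for n
          by (rule L2_dom[OF _ u(1)[of n]]) (use mu Sm in \<open>simp_all add: indicator_def\<close>)
        show "E (\<lambda>x. indicator S x * u n x) \<le> ennreal d" for n
          using True u(1)[of n] u(3)[of n] unfolding E_invariant_def by (meson order_trans)
        show "cl M (\<lambda>n x. indicator S x * u n x) (\<lambda>x. t * indicator S x)"
        proof (rule cl_lip[OF u(2) zero_le_one mu _ _ mi])
          show "(\<lambda>x. t * 1) \<in> borel_measurable M" by simp
          show "(\<lambda>x. indicator S x * u n x) \<in> borel_measurable M" for n using mu Sm by simp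
          show "\<bar>indicator S x * u n x - t * indicator S x\<bar> \<le> 1 * \<bar>u n x - t * 1\<bar>" for n x
            by (simp add: indicator_def)
        qed
      qed
    next
      case False
      with inv have inv2: "E_invariant M E (space M - S)" by simp
      have "Pz M E (\<lambda>x. (2 * t) * 1)" using K1 unfolding Kz_def by blast
      then obtain u where u: "\<And>n. u n \<in> L2 M" "cl M u (\<lambda>x. (2 * t) * 1)" "\<And>n. E (u n) \<le> ennreal d"
        using d unfolding Pz_def by blast
      have mu: "u n \<in> borel_measurable M" for n by (rule L2_measurable[OF u(1)])
      have Sc: "space M - S \<in> sets M" using Sm by auto
      show ?thesis
      proof (intro exI[of _ "\<lambda>n x. indicator S x * (u n x / 2)"] conjI allI)
        have mw: "(\<lambda>x. indicator S x * (u n x / 2)) \<in> borel_measurable M" for n using mu Sm by simp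
        show wL: "(\<lambda>x. indicator S x * (u n x / 2)) \<in> L2 M" for n
          by (rule L2_dom[OF mw u(1)[of n]]) (simp add: indicator_def)
        show "E (\<lambda>x. indicator S x * (u n x / 2)) \<le> ennreal d" for n
        proof -
          have mv: "(\<lambda>x. indicator (space M - S) x * u n x) \<in> borel_measurable M"
            by (intro borel_measurable_times borel_measurable_indicator Sc mu)
          have vL: "(\<lambda>x. indicator (space M - S) x * u n x) \<in> L2 M"
            by (rule L2_dom[OF mv u(1)[of n]]) (simp add: indicator_def)
          have nvL: "(\<lambda>x. - (indicator (space M - S) x * u n x)) \<in> L2 M" by (rule L2_uminus[OF vL])
          have "E (\<lambda>x. indicator S x * (u n x / 2)) = E (\<lambda>x. (u n x + - (indicator (space M - S) x * u n x)) / 2)"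
          proof (rule E_cong[OF wL])
            show "(\<lambda>x. (u n x + - (indicator (space M - S) x * u n x)) / 2) \<in> L2 M"
              using L2_scale[OF L2_add[OF u(1) nvL], of "1/2"] by simp
            show "AE x in M. indicator S x * (u n x / 2) = (u n x + - (indicator (space M - S) x * u n x)) / 2"
              by (rule AE_I2) (simp add: indicator_def)
          qed
          also have "\<dots> \<le> ennreal (1/2) * E (u n) + ennreal (1/2) * E (\<lambda>x. - (indicator (space M - S) x * u n x))"
            by (rule E_mid[OF u(1) nvL])
          also have "E (\<lambda>x. - (indicator (space M - S) x * u n x)) = E (\<lambda>x. indicator (space M - S) x * u n x)"
            by (rule E_uminus[OF vL])
          also have "E (\<lambda>x. indicator (space M - S) x * u n x) \<le> E (u n)"
            using inv2 u(1)[of n] unfolding E_invariant_def by blast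
          also have "ennreal (1/2) * E (u n) + ennreal (1/2) * E (u n) \<le> ennreal (1/2) * ennreal d + ennreal (1/2) * ennreal d"
            by (intro add_mono mult_left_mono u(3)) simp_all
          also have "\<dots> = ennreal d" using d by (intro half_half) simp
          finally show ?thesis by (simp add: mult_left_mono)
        qed
        show "cl M (\<lambda>n x. indicator S x * (u n x / 2)) (\<lambda>x. t * indicator S x)"
        proof (rule cl_lip[OF u(2) _ mu _ mw mi])
          show "(0::real) \<le> 1/2" by simp
          show "(\<lambda>x. (2 * t) * 1) \<in> borel_measurable M" by simp
          show "\<bar>indicator S x * (u n x / 2) - t * indicator S x\<bar> \<le> 1/2 * \<bar>u n x - 2 * t * 1\<bar>" for n x
          proof -
            have "\<bar>u n x / 2 - t\<bar> = 1/2 * \<bar>u n x - 2 * t\<bar>" by (simp add: abs_if field_simps)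
            then show ?thesis by (simp add: indicator_def)
          qed
        qed
      qed
    qed
  qed
qed

end



context sndf begin

lemma A_inv_Pow: "A_inv M E \<subseteq> Pow (space M)"
  by (auto simp: A_inv_def dest: sets.sets_into_space)

lemma N_space: "space (sigma (space M) (A_inv M E)) = space M"
  by (rule space_measure_of[OF A_inv_Pow])

lemma N_sets: "sets (sigma (space M) (A_inv M E)) = sigma_sets (space M) (A_inv M E)"
  by (rule sets_measure_of[OF A_inv_Pow])

lemma sigma_sub: "sigma_sets (space M) (A_inv M E) \<subseteq> sets M"
  by (rule sets.sigma_sets_subset) (auto simp: A_inv_def)

lemma meas_N_M:
  assumes "f \<in> borel_measurable (sigma (space M) (A_inv M E))"
  shows "(f::'a \<Rightarrow> real) \<in> borel_measurable M"
  unfolding borel_measurable_iff_greater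
proof
  fix a
  have "{w \<in> space (sigma (space M) (A_inv M E)). a < f w} \<in> sets (sigma (space M) (A_inv M E))"
    using assms unfolding borel_measurable_iff_greater by blast
  then show "{w\<in>space M. a < f w} \<in> sets M" using N_space N_sets sigma_sub by auto
qed

lemma Kz_sigma:
  assumes K1: "Kz M E (\<lambda>x. 1)" and S: "S \<in> sigma_sets (space M) (A_inv M E)"
  shows "Kz M E (indicator S)"
  using S
proof (induction rule: sigma_sets.induct)
  case (Basic a) then show ?case by (rule Kz_ind_inv[OF K1])
next
  case Empty
  have "indicator {} = (\<lambda>x::'a. 0::real)" by (rule ext) simp
  then show ?case using Kz_zero by simp
next
  case (Compl a)
  have am: "a \<in> sets M" using Compl.hyps sigma_sub by blast
  have "Kz M E (\<lambda>x. 1 + (-1) * indicator a x)"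
    by (rule Kz_add[OF K1 Kz_scale[OF Compl.IH]]) (use am in simp_all)
  then show ?case
    by (rule Kz_space) (use am in \<open>simp_all add: indicator_def\<close>)
next
  case (Union A)
  have Am: "A i \<in> sets M" for i using Union.hyps sigma_sub by blast
  define F where "F n = (\<Union>i<n. A i)" for n
  have Fm: "F n \<in> sets M" for n unfolding F_def using Am by auto
  have Um: "(\<Union>i. A i) \<in> sets M" using Am by auto
  have KF: "Kz M E (indicator (F n))" for n
  proof (induction n)
    case 0
    have "indicator (F 0) = (\<lambda>x::'a. 0::real)" by (rule ext) (simp add: F_def)
    then show ?case using Kz_zero by simp
  next
    case (Suc n)
    have "Kz M E (\<lambda>x. max (indicator (F n) x) (indicator (A n) x))"
      by (rule Kz_max[OF Suc.IH Union.IH]) (use Fm Am in simp_all)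
    moreover have "(\<lambda>x. max (indicator (F n) x) (indicator (A n) x)) = (indicator (F (Suc n)) :: 'a \<Rightarrow> real)"
      by (rule ext) (simp add: F_def indicator_def lessThan_Suc)
    ultimately show ?case by simp
  qed
  show ?case unfolding Kz_def
  proof
    fix t :: real
    show "Pz M E (\<lambda>x. t * indicator (\<Union>i. A i) x)"
    proof (rule Pz_limit_pw[of "\<lambda>n x. t * indicator (F n) x"])
      show "Pz M E (\<lambda>x. t * indicator (F n) x)" for n using KF[of n] unfolding Kz_def by blast
      show "(\<lambda>x. t * indicator (F n) x) \<in> borel_measurable M" for n using Fm[of n] by simp
      show "(\<lambda>x. t * indicator (\<Union>i. A i) x) \<in> borel_measurable M" using Um by simp
      show "(\<lambda>n. t * indicator (F n) x) \<longlonglongrightarrow> t * indicator (\<Union>i. A i) x" if "x \<in> space M" for x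
      proof (cases "x \<in> (\<Union>i. A i)")
        case True
        then obtain i where i: "x \<in> A i" by blast
        have "eventually (\<lambda>n. t * indicator (F n) x = t * indicator (\<Union>i. A i) x) sequentially"
          unfolding eventually_sequentially
        proof (intro exI allI impI)
          fix n assume "Suc i \<le> n"
          then have "x \<in> F n" using i unfolding F_def by auto
          then show "t * indicator (F n) x = t * indicator (\<Union>i. A i) x" using True by simp
        qed
        then show ?thesis by (rule tendsto_eventually)
      next
        case False
        then have "x \<notin> F n" for n unfolding F_def by auto
        then have eq: "(\<lambda>n. t * (indicator (F n) x :: real)) = (\<lambda>n. t * indicator (\<Union>i. A i) x)"
          using False by (simp add: indicator_def)
        show ?thesis unfolding eq by (rule tendsto_const)
      qed
    qed
  qed
qed

lemma Kz_sum:
  assumes "finite Y" "\<And>y. y \<in> Y \<Longrightarrow> Kz M E (f y)" "\<And>y. y \<in> Y \<Longrightarrow> f y \<in> borel_measurable M"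
  shows "Kz M E (\<lambda>x. \<Sum>y\<in>Y. f y x)"
  using assms
proof (induction Y rule: finite_induct)
  case empty then show ?case using Kz_zero by simp
next
  case (insert y Y)
  have "Kz M E (\<lambda>x. f y x + (\<Sum>y\<in>Y. f y x))"
  proof (rule Kz_add)
    show "Kz M E (f y)" using insert by simp
    show "Kz M E (\<lambda>x. \<Sum>y\<in>Y. f y x)" using insert by simp
    show "f y \<in> borel_measurable M" using insert by simp
    show "(\<lambda>x. \<Sum>y\<in>Y. f y x) \<in> borel_measurable M"
      by (rule borel_measurable_sum) (use insert in simp)
  qed
  then show ?case using insert by simp
qed

lemma Kz_N:
  assumes K1: "Kz M E (\<lambda>x. 1)" and g: "g \<in> borel_measurable (sigma (space M) (A_inv M E))"
  shows "Kz M E g"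
proof -
  let ?N = "sigma (space M) (A_inv M E)"
  obtain F where F: "\<And>i. simple_function ?N (F i)" "\<And>x. x \<in> space ?N \<Longrightarrow> (\<lambda>i. F i x) \<longlonglongrightarrow> g x"
    using borel_measurable_implies_sequence_metric[OF g, of 0] by blast
  have mF: "F i \<in> borel_measurable M" for i
    by (rule meas_N_M[OF borel_measurable_simple_function[OF F(1)]])
  have KF: "Kz M E (F i)" for i
  proof -
    let ?Y = "F i ` space ?N"
    have fin: "finite ?Y" by (rule simple_functionD(1)[OF F(1)])
    have setsS: "F i -` {y} \<inter> space M \<in> sigma_sets (space M) (A_inv M E)" for y
      using simple_functionD(2)[OF F(1), of i "{y}"] N_space N_sets by simp
    have setsM: "F i -` {y} \<inter> space M \<in> sets M" for y using setsS[of y] sigma_sub by blast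
    have "Kz M E (\<lambda>x. \<Sum>y\<in>?Y. indicator (F i -` {y} \<inter> space ?N) x *\<^sub>R y)"
    proof (rule Kz_sum[OF fin])
      fix y
      have "Kz M E (\<lambda>x. y * indicator (F i -` {y} \<inter> space M) x)"
        by (rule Kz_scale[OF Kz_sigma[OF K1 setsS]])
      then show "Kz M E (\<lambda>x. indicator (F i -` {y} \<inter> space ?N) x *\<^sub>R y)"
        by (simp add: N_space mult.commute)
      show "(\<lambda>x. indicator (F i -` {y} \<inter> space ?N) x *\<^sub>R y) \<in> borel_measurable M"
        using setsM[of y] by (simp add: N_space)
    qed
    then show ?thesis
    proof (rule Kz_space)
      show "(\<Sum>y\<in>?Y. indicator (F i -` {y} \<inter> space ?N) x *\<^sub>R y) = F i x" if "x \<in> space M" for x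
        using simple_function_indicator_representation_banach[OF F(1), of x i] that N_space by simp
      show "(\<lambda>x. \<Sum>y\<in>?Y. indicator (F i -` {y} \<inter> space ?N) x *\<^sub>R y) \<in> borel_measurable M"
        by (rule borel_measurable_sum) (use setsM in \<open>simp add: N_space\<close>)
      show "F i \<in> borel_measurable M" by (rule mF)
    qed
  qed
  show ?thesis unfolding Kz_def
  proof
    fix t :: real
    show "Pz M E (\<lambda>x. t * g x)"
    proof (rule Pz_limit_pw[of "\<lambda>i x. t * F i x"])
      show "Pz M E (\<lambda>x. t * F i x)" for i using KF[of i] unfolding Kz_def by blast
      show "(\<lambda>x. t * F i x) \<in> borel_measurable M" for i using mF[of i] by simp
      show "(\<lambda>x. t * g x) \<in> borel_measurable M" using meas_N_M[OF g] by simp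
      show "(\<lambda>i. t * F i x) \<longlonglongrightarrow> t * g x" if "x \<in> space M" for x
        using F(2)[of x] that N_space by (intro tendsto_mult_left) simp
    qed
  qed
qed

lemma Kz_level:
  assumes K1: "Kz M E (\<lambda>x. 1)" and Kf: "Kz M E f" and mf: "f \<in> borel_measurable M"
  shows "Kz M E (indicator {w \<in> space M. c < f w})"
proof -
  let ?B = "{w \<in> space M. c < f w}"
  have Bm: "?B \<in> sets M" using mf by measurable
  have mfc: "(\<lambda>x. f x + (-c) * 1) \<in> borel_measurable M" using mf by simp
  have Kfc: "Kz M E (\<lambda>x. f x + (-c) * 1)" by (rule Kz_add[OF Kf Kz_scale[OF K1] mf]) simp
  show ?thesis unfolding Kz_def
  proof
    fix t :: real
    define \<sigma> :: real where "\<sigma> = (if 0 \<le> t then 1 else -1)"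
    have s1: "\<bar>\<sigma>\<bar> = 1" by (simp add: \<sigma>_def)
    have st: "\<sigma> * \<bar>t\<bar> = t" by (simp add: \<sigma>_def)
    define C where "C y = \<sigma> * min (max y 0) \<bar>t\<bar>" for y :: real
    have C1: "\<bar>C s - C u\<bar> \<le> \<bar>s - u\<bar>" for s u
    proof -
      have "C s - C u = \<sigma> * (min (max s 0) \<bar>t\<bar> - min (max u 0) \<bar>t\<bar>)"
        by (simp add: C_def right_diff_distrib)
      then have "\<bar>C s - C u\<bar> = \<bar>min (max s 0) \<bar>t\<bar> - min (max u 0) \<bar>t\<bar>\<bar>" by (simp add: abs_mult s1)
      also have "\<dots> \<le> \<bar>s - u\<bar>" by (rule clamp01_lip) simp
      finally show ?thesis .
    qed
    have C0: "C 0 = 0" by (simp add: C_def)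
    define s where "s k = (\<lambda>x. C ((\<bar>t\<bar> * real (Suc k)) * (f x + (-c) * 1)))" for k
    have Ps: "Pz M E (s k)" for k
    proof -
      have "Pz M E (\<lambda>x. (\<bar>t\<bar> * real (Suc k)) * (f x + (-c) * 1))" using Kfc unfolding Kz_def by blast
      then show ?thesis unfolding s_def by (rule Pz_contr[OF _ _ C1 C0]) (use mfc in simp)
    qed
    have ms: "s k \<in> borel_measurable M" for k
      unfolding s_def by (rule lip_meas[OF _ C1]) (use mfc in simp)
    have seq: "s k x = t * min (max (real (Suc k) * (f x - c)) 0) 1" for k x
    proof -
      have "min (max ((\<bar>t\<bar> * real (Suc k)) * (f x + (-c) * 1)) 0) \<bar>t\<bar>
          = \<bar>t\<bar> * min (max (real (Suc k) * (f x - c)) 0) 1"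
        using clamp_hom[of "\<bar>t\<bar>" "real (Suc k) * (f x - c)"] by (simp add: mult.assoc)
      then have "s k x = \<sigma> * (\<bar>t\<bar> * min (max (real (Suc k) * (f x - c)) 0) 1)"
        by (simp add: s_def C_def)
      also have "\<dots> = t * min (max (real (Suc k) * (f x - c)) 0) 1"
        by (simp add: st mult.assoc[symmetric])
      finally show ?thesis .
    qed
    show "Pz M E (\<lambda>x. t * indicator ?B x)"
    proof (rule Pz_limit_pw[OF Ps _ ms])
      show "(\<lambda>x. t * indicator ?B x) \<in> borel_measurable M" using Bm by simp
      fix x assume x: "x \<in> space M"
      show "(\<lambda>k. s k x) \<longlonglongrightarrow> t * indicator ?B x"
      proof (cases "c < f x")
        case True
        then have fc: "0 < f x - c" by simp
        obtain n :: nat where n: "1 < real n * (f x - c)" using ex_less_of_nat_mult[OF fc, of 1] by auto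
        have "eventually (\<lambda>k. s k x = t * indicator ?B x) sequentially"
          unfolding eventually_sequentially
        proof (intro exI allI impI)
          fix k assume "n \<le> k"
          then have "real n \<le> real (Suc k)" by simp
          then have "real n * (f x - c) \<le> real (Suc k) * (f x - c)" using fc by (intro mult_right_mono) auto
          then have "1 \<le> real (Suc k) * (f x - c)" using n by linarith
          then have "min (max (real (Suc k) * (f x - c)) 0) 1 = 1" by (simp add: min_def max_def)
          then show "s k x = t * indicator ?B x" using True x by (simp add: seq indicator_def)
        qed
        then show ?thesis by (rule tendsto_eventually)
      next
        case False
        then have "real (Suc k) * (f x - c) \<le> 0" for k by (simp add: mult_nonneg_nonpos)
        then have "min (max (real (Suc k) * (f x - c)) 0) 1 = 0" for k by (simp add: min_def max_def)
        then have "s k x = t * indicator ?B x" for k using False by (simp add: seq indicator_def)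
        then show ?thesis by simp
      qed
    qed
  qed
qed

lemma main1:
  assumes K1: "Kz M E (\<lambda>x. 1)" and f: "f \<in> borel_measurable M"
  shows "Le_norm M E f = 0 \<longleftrightarrow> (\<exists>g\<in>borel_measurable (sigma (space M) (A_inv M E)). AE x in M. f x = g x)"
proof
  assume L: "Le_norm M E f = 0"
  have Kf: "Kz M E f" by (rule Le_norm_Kz[OF f L])
  have "f \<in> borel_measurable (sigma (space M) (A_inv M E))"
    unfolding borel_measurable_iff_greater
  proof
    fix c
    let ?B = "{w \<in> space M. c < f w}"
    have Bm: "?B \<in> sets M" using f by measurable
    have "E_invariant M E ?B" by (rule invariant_of_Kz[OF Bm Kz_level[OF K1 Kf f]])
    then have "?B \<in> A_inv M E" using Bm by (simp add: A_inv_def)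
    then have "?B \<in> sigma_sets (space M) (A_inv M E)" by (rule sigma_sets.Basic)
    then show "{w \<in> space (sigma (space M) (A_inv M E)). c < f w} \<in> sets (sigma (space M) (A_inv M E))"
      using N_space N_sets by simp
  qed
  then show "\<exists>g\<in>borel_measurable (sigma (space M) (A_inv M E)). AE x in M. f x = g x"
    by (intro bexI[of _ f]) simp_all
next
  assume "\<exists>g\<in>borel_measurable (sigma (space M) (A_inv M E)). AE x in M. f x = g x"
  then obtain g where g: "g \<in> borel_measurable (sigma (space M) (A_inv M E))" "AE x in M. f x = g x"
    by blast
  have Kg: "Kz M E g" by (rule Kz_N[OF K1 g(1)])
  have ae: "AE x in M. g x = f x" using g(2) by eventually_elim simp
  have "Kz M E f" by (rule Kz_ae[OF Kg ae meas_N_M[OF g(1)] f])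
  then show "Le_norm M E f = 0" by (rule Kz_Le_norm[OF _ f])
qed

end

theorem corollary3p18:
  fixes M :: "'a measure" and E :: "('a \<Rightarrow> real) \<Rightarrow> ennreal"
  assumes "sigma_finite_measure M"
    and "nonlinear_dirichlet_form M E"
    and "(\<lambda>x. 1) \<in> M_Ee M E"
    and "Le_norm M E (\<lambda>x. 1) = 0"
  shows "(\<forall>f\<in>borel_measurable M. (Le_norm M E f = 0 \<longleftrightarrow>
           (\<exists>g\<in>borel_measurable (sigma (space M) (A_inv M E)). AE x in M. f x = g x))) \<and>
         ((\<forall>f\<in>borel_measurable M. (Le_norm M E f = 0 \<longleftrightarrow> (\<exists>c::real. AE x in M. f x = c)))
           \<longrightarrow> irreducible_form M E)"
proof -
  interpret sndf M E using assms(1,2) by (simp add: sndf_def sndf_axioms_def ndf_def)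
  have K1: "Kz M E (\<lambda>x. 1)" by (rule Le_norm_Kz) (simp_all add: assms(4))
  have part1: "\<forall>f\<in>borel_measurable M. (Le_norm M E f = 0 \<longleftrightarrow>
           (\<exists>g\<in>borel_measurable (sigma (space M) (A_inv M E)). AE x in M. f x = g x))"
    using main1[OF K1] by blast
  have part2: "(\<forall>f\<in>borel_measurable M. (Le_norm M E f = 0 \<longleftrightarrow> (\<exists>c::real. AE x in M. f x = c)))
           \<longrightarrow> irreducible_form M E"
  proof
    assume H: "\<forall>f\<in>borel_measurable M. (Le_norm M E f = 0 \<longleftrightarrow> (\<exists>c::real. AE x in M. f x = c))"
    show "irreducible_form M E" unfolding irreducible_form_def
    proof (intro allI impI)
      fix A assume A: "E_invariant M E A"
      have Am: "A \<in> sets M" using A by (simp add: E_invariant_def)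
      have "A \<in> A_inv M E" using A Am by (simp add: A_inv_def)
      then have "A \<in> sets (sigma (space M) (A_inv M E))" using N_sets by auto
      then have gi: "(indicator A :: 'a \<Rightarrow> real) \<in> borel_measurable (sigma (space M) (A_inv M E))" by simp
      have mi: "(indicator A :: 'a \<Rightarrow> real) \<in> borel_measurable M" using Am by simp
      have "\<exists>g\<in>borel_measurable (sigma (space M) (A_inv M E)). AE x in M. (indicator A x :: real) = g x"
        using gi by (intro bexI[of _ "indicator A"]) simp_all
      then have "Le_norm M E (indicator A) = 0" using part1 mi by blast
      then obtain c :: real where c: "AE x in M. indicator A x = c" using H mi by blast
      show "emeasure M A = 0 \<or> emeasure M (space M - A) = 0"
      proof (cases "c = 1")
        case True
        have "AE x in M. x \<in> A" using c
        proof eventually_elim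
          case (elim x) then show ?case using True by (simp add: indicator_def split: if_splits)
        qed
        moreover have "(AE x in M. x \<in> A) \<longleftrightarrow> emeasure M (space M - A) = 0"
          by (rule AE_iff_measurable) (use Am in auto)
        ultimately show ?thesis by simp
      next
        case False
        have "AE x in M. x \<notin> A" using c
        proof eventually_elim
          case (elim x) then show ?case using False by (cases "x \<in> A") (simp_all add: indicator_def)
        qed
        moreover have "(AE x in M. x \<notin> A) \<longleftrightarrow> emeasure M A = 0"
          by (rule AE_iff_measurable[OF Am]) (use sets.sets_into_space[OF Am] in auto)
        ultimately show ?thesis by simp
      qed
    qed
  qed
  show ?thesis using part1 part2 by blast
qed


end
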